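(* Let $A\in\mathbb{R}^{2\times 2}$ be Hurwitz (all eigenvalues with negative real part), $b,c^\mathsf{T}\in\mathbb{R}^2$, and let $g(t)=ce^{At}b\,\mathds{1}_{[0,\infty)}(t)$ be the impulse response of the causal stable second-order LTI system $(A,b,c)$. Then the system is strongly unimodal if and only if $g$ is nonnegative and $$\dot g(0)^2-g(0)\ddot g(0)\ge 0,$$ where $g(0)=cb$, $\dot g(0)=cAb$, $\ddot g(0)=cA^2b$.
   Context: The triple $(A,b,c)$ denotes the LTI system $\dot x=Ax+bu$, $y=cx$. Convolution: $(g\ast u)(t)=\int_{-\infty}^{\infty}g(t-\tau)u(\tau)\,d\tau$. A function $f:\mathbb{R}\to\mathbb{R}$ is unimodal (quasi-concave) if $f(\lambda x+(1-\lambda)y)\ge\min\{f(x),f(y)\}$ for all $x,y$ and $\lambda\in[0,1]$; the set of such functions is $\mathcal{S}_{qc}$. The system is strongly unimodal if $g\ast u\in\mathcal{S}_{qc}$ for all $u\in\mathcal{S}_{qc}$. *)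

theory Defs
  imports "HOL-Analysis.Analysis"
begin

definition mat_pow :: "real^'n^'n \<Rightarrow> nat \<Rightarrow> real^'n^'n" where
  "mat_pow M k = ((\<lambda>X. M ** X) ^^ k) (mat 1)"

definition mat_exp :: "real^'n^'n \<Rightarrow> real^'n^'n" where
  "mat_exp M = (\<Sum>k. (1 / fact k) *\<^sub>R mat_pow M k)"

definition cmat :: "real^'n^'n \<Rightarrow> complex^'n^'n" where
  "cmat M = (\<chi> i j. complex_of_real (M $ i $ j))"

definition hurwitz :: "real^'n^'n \<Rightarrow> bool" where
  "hurwitz M \<longleftrightarrow>
     (\<forall>(l::complex) (v::complex^'n). v \<noteq> 0 \<and> cmat M *v v = l *s v \<longrightarrow> Re l < 0)"

definition impulse_resp :: "real^'n^'n \<Rightarrow> real^'n \<Rightarrow> real^'n \<Rightarrow> real \<Rightarrow> real" where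
  "impulse_resp A b c t = (if t \<ge> 0 then c \<bullet> (mat_exp (t *\<^sub>R A) *v b) else 0)"

text \<open>Unimodal (quasi-concave) functions.\<close>

definition quasi_concave :: "(real \<Rightarrow> real) \<Rightarrow> bool" where
  "quasi_concave f \<longleftrightarrow>
     (\<forall>x y l. 0 \<le> l \<and> l \<le> 1 \<longrightarrow> f (l * x + (1 - l) * y) \<ge> min (f x) (f y))"

definition convolution :: "(real \<Rightarrow> real) \<Rightarrow> (real \<Rightarrow> real) \<Rightarrow> real \<Rightarrow> real" where
  "convolution g u t = (LINT \<tau>|lborel. g (t - \<tau>) * u \<tau>)"

definition strongly_unimodal :: "real^'n^'n \<Rightarrow> real^'n \<Rightarrow> real^'n \<Rightarrow> bool" where
  "strongly_unimodal A b c \<longleftrightarrow>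
     (\<forall>u. quasi_concave u \<and>
          (\<forall>t. integrable lborel (\<lambda>\<tau>. impulse_resp A b c (t - \<tau>) * u \<tau>))
          \<longrightarrow> quasi_concave (convolution (impulse_resp A b c) u))"

end

theory Submission
  imports Defs
begin



lemma mat_pow_0[simp]: "mat_pow M 0 = mat 1"
  by (simp add: mat_pow_def)
lemma mat_pow_Suc: "mat_pow M (Suc k) = M ** mat_pow M k"
  by (simp add: mat_pow_def)

lemma mat_pow_scale: "mat_pow (t *\<^sub>R A) k = (t ^ k) *\<^sub>R mat_pow A k"
  by (induction k) (auto simp: mat_pow_Suc scalar_matrix_assoc matrix_scalar_ac mult.commute)

lemma scaleR_mv: "((s::real) *\<^sub>R (M::real^'n^'m)) *v b = s *\<^sub>R (M *v b)"
  by (simp add: matrix_vector_mult_def vec_eq_iff sum_distrib_left algebra_simps)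

lemma entry_bound:
  fixes A :: "real^'n^'n"
  defines "N \<equiv> (\<Sum>i\<in>UNIV. \<Sum>j\<in>UNIV. \<bar>A$i$j\<bar>)"
  shows "\<bar>mat_pow A k $ i $ j\<bar> \<le> N ^ k"
proof (induction k arbitrary: i j)
  case 0
  then show ?case by (simp add: mat_def)
next
  case (Suc k)
  have "\<bar>mat_pow A (Suc k) $ i $ j\<bar> = \<bar>\<Sum>l\<in>UNIV. A$i$l * mat_pow A k $ l $ j\<bar>"
    by (simp add: mat_pow_Suc matrix_matrix_mult_def)
  also have "\<dots> \<le> (\<Sum>l\<in>UNIV. \<bar>A$i$l\<bar> * N ^ k)"
    by (rule order_trans[OF sum_abs]) (auto intro!: sum_mono mult_left_mono Suc simp: abs_mult)
  also have "\<dots> = (\<Sum>l\<in>UNIV. \<bar>A$i$l\<bar>) * N ^ k" by (simp add: sum_distrib_right)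
  also have "(\<Sum>l\<in>UNIV. \<bar>A$i$l\<bar>) \<le> N"
    unfolding N_def by (rule member_le_sum[where f="\<lambda>i. \<Sum>j\<in>UNIV. \<bar>A$i$j\<bar>"]) (auto intro: sum_nonneg)
  hence "(\<Sum>l\<in>UNIV. \<bar>A$i$l\<bar>) * N ^ k \<le> N * N ^ k"
    by (rule mult_right_mono) (auto simp: N_def intro!: sum_nonneg zero_le_power)
  finally show ?case by simp
qed

lemma norm_mat_pow:
  fixes A :: "real^'n^'n"
  defines "N \<equiv> (\<Sum>i\<in>UNIV. \<Sum>j\<in>UNIV. \<bar>A$i$j\<bar>)"
  shows "norm (mat_pow A k) \<le> real (CARD('n) * CARD('n)) * N ^ k"
proof -
  have "norm (mat_pow A k) \<le> (\<Sum>i\<in>UNIV. norm (mat_pow A k $ i))"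
    unfolding norm_vec_def by (rule L2_set_le_sum) auto
  also have "\<dots> \<le> (\<Sum>i\<in>(UNIV::'n set). (\<Sum>j\<in>(UNIV::'n set). N ^ k))"
    apply (rule sum_mono)
    apply (rule order_trans[OF norm_le_l1_cart])
    apply (rule sum_mono)
    using entry_bound[of A k] by (simp add: N_def)
  finally show ?thesis by simp
qed

lemma summable_mat_exp:
  fixes A :: "real^'n^'n"
  shows "summable (\<lambda>k. (1 / fact k) *\<^sub>R mat_pow A k)"
proof -
  define N where "N = (\<Sum>i\<in>UNIV. \<Sum>j\<in>UNIV. \<bar>A$i$j\<bar>)"
  define C where "C = real (CARD('n) * CARD('n))"
  have e: "summable (\<lambda>k. inverse (fact k) * N ^ k)" by (rule summable_exp)
  have s1: "summable (\<lambda>k. C * (inverse (fact k) * N ^ k))"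
    by (rule summable_mult[OF e])
  moreover have nb: "norm ((1 / fact k) *\<^sub>R mat_pow A k) \<le> C * (inverse (fact k) * N ^ k)" for k
  proof -
    have "norm ((1 / fact k) *\<^sub>R mat_pow A k) = inverse (fact k) * norm (mat_pow A k)"
      by (simp add: divide_inverse)
    also have "\<dots> \<le> inverse (fact k) * (C * N ^ k)"
      using norm_mat_pow[of A k] by (intro mult_left_mono) (auto simp: N_def C_def)
    finally show ?thesis by (simp add: ac_simps)
  qed
  have "summable (\<lambda>k. norm ((1 / fact k) *\<^sub>R mat_pow A k))"
    by (rule summable_comparison_test'[where N=0, OF s1]) (use nb in auto)
  then show ?thesis by (rule summable_norm_cancel)
qed

lemma bl_cb:
  fixes b c :: "real^'n"
  shows "bounded_linear (\<lambda>M::real^'n^'n. c \<bullet> (M *v b))"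
  by (simp add: linear_conv_bounded_linear[symmetric] linear_iff matrix_vector_mult_add_rdistrib
      inner_add_right scaleR_mv)

lemma g_series:
  fixes A :: "real^'n^'n" and b c :: "real^'n"
  shows "(\<lambda>k. (t ^ k / fact k) * (c \<bullet> (mat_pow A k *v b))) sums (c \<bullet> (mat_exp (t *\<^sub>R A) *v b))"
proof -
  have s: "summable (\<lambda>k. (1 / fact k) *\<^sub>R mat_pow (t *\<^sub>R A) k)" by (rule summable_mat_exp)
  have "(\<lambda>k. c \<bullet> (((1 / fact k) *\<^sub>R mat_pow (t *\<^sub>R A) k) *v b)) sums (c \<bullet> (mat_exp (t *\<^sub>R A) *v b))"
    unfolding mat_exp_def by (rule bounded_linear.sums[OF bl_cb]) (use s in \<open>simp add: summable_sums\<close>)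
  moreover have "c \<bullet> (((1 / fact k) *\<^sub>R mat_pow (t *\<^sub>R A) k) *v b) = (t ^ k / fact k) * (c \<bullet> (mat_pow A k *v b))" for k
    by (simp add: mat_pow_scale scaleR_mv)
  ultimately show ?thesis by simp
qed




definition tr2 :: "real^2^2 \<Rightarrow> real" where "tr2 A = A$1$1 + A$2$2"
definition det2 :: "real^2^2 \<Rightarrow> real" where "det2 A = A$1$1 * A$2$2 - A$1$2 * A$2$1"

lemma cayley_hamilton2: "A ** A = tr2 A *\<^sub>R A - det2 A *\<^sub>R mat 1"
  by (simp add: vec_eq_iff forall_2 matrix_matrix_mult_def sum_2 tr2_def det2_def mat_def algebra_simps)

lemma mat_pow_rec2: "mat_pow A (Suc (Suc k)) = tr2 A *\<^sub>R mat_pow A (Suc k) - det2 A *\<^sub>R mat_pow A k"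
proof -
  have "mat_pow A (Suc (Suc k)) = (A ** A) ** mat_pow A k"
    by (simp add: mat_pow_Suc matrix_mul_assoc)
  also have "\<dots> = tr2 A *\<^sub>R mat_pow A (Suc k) - det2 A *\<^sub>R mat_pow A k"
    by (simp add: cayley_hamilton2 mat_pow_Suc vec_eq_iff matrix_matrix_mult_def sum_2 forall_2
          mat_def algebra_simps)
  finally show ?thesis .
qed

lemma cmat_mv2:
  fixes A :: "real^2^2" and v :: "complex^2"
  shows
  "(cmat A *v v) $ 1 = of_real (A$1$1) * v$1 + of_real (A$1$2) * v$2"
  "(cmat A *v v) $ 2 = of_real (A$2$1) * v$1 + of_real (A$2$2) * v$2"
  by (simp_all add: cmat_def matrix_vector_mult_def sum_2)

lemma eigvec_exists:
  fixes A :: "real^2^2" and \<mu> :: complex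
  assumes "\<mu>^2 - of_real (tr2 A) * \<mu> + of_real (det2 A) = 0"
  shows "\<exists>v::complex^2. v \<noteq> 0 \<and> cmat A *v v = \<mu> *s v"
proof -
  define a11 where "a11 = complex_of_real (A$1$1)"
  define a12 where "a12 = complex_of_real (A$1$2)"
  define a21 where "a21 = complex_of_real (A$2$1)"
  define a22 where "a22 = complex_of_real (A$2$2)"
  have ch: "\<mu>^2 - (a11 + a22) * \<mu> + (a11 * a22 - a12 * a21) = 0"
    using assms by (simp add: tr2_def det2_def a11_def a12_def a21_def a22_def)
  have mv: "(cmat A *v v) $ 1 = a11 * v$1 + a12 * v$2" "(cmat A *v v) $ 2 = a21 * v$1 + a22 * v$2" for v
    by (simp_all add: cmat_mv2 a11_def a12_def a21_def a22_def)
  show ?thesis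
  proof (cases "a12 = 0")
    case False
    define v :: "complex^2" where "v = vector [a12, \<mu> - a11]"
    have "v \<noteq> 0" using False by (auto simp: v_def vec_eq_iff forall_2)
    moreover have "cmat A *v v = \<mu> *s v"
      using ch by (auto simp: vec_eq_iff forall_2 mv v_def algebra_simps power2_eq_square)
    ultimately show ?thesis by blast
  next
    case True
    then have "(\<mu> - a11) * (\<mu> - a22) = 0" using ch by (simp add: algebra_simps power2_eq_square)
    then consider "\<mu> = a22" | "\<mu> = a11" "\<mu> \<noteq> a22" by auto
    then show ?thesis
    proof cases
      case 1
      define v :: "complex^2" where "v = vector [0, 1]"
      have "v \<noteq> 0" by (auto simp: v_def vec_eq_iff forall_2)
      moreover have "cmat A *v v = \<mu> *s v"
        using 1 True by (auto simp: vec_eq_iff forall_2 mv v_def)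
      ultimately show ?thesis by blast
    next
      case 2
      define v :: "complex^2" where "v = vector [a11 - a22, a21]"
      have "v \<noteq> 0" using 2 by (auto simp: v_def vec_eq_iff forall_2)
      moreover have "cmat A *v v = \<mu> *s v"
        using 2 True by (auto simp: vec_eq_iff forall_2 mv v_def algebra_simps)
      ultimately show ?thesis by blast
    qed
  qed
qed

lemma hurwitz_root:
  fixes A :: "real^2^2" and \<mu> :: complex
  assumes "hurwitz A" "\<mu>^2 - of_real (tr2 A) * \<mu> + of_real (det2 A) = 0"
  shows "Re \<mu> < 0"
  using eigvec_exists[OF assms(2)] assms(1) unfolding hurwitz_def by blast

lemma hurwitz_tr_det:
  fixes A :: "real^2^2"
  assumes "hurwitz A"
  shows "tr2 A < 0" "det2 A > 0"
proof -
  define t where "t = tr2 A"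
  define d where "d = det2 A"
  define D where "D = t^2 - 4*d"
  have "t < 0 \<and> d > 0"
  proof (cases "D \<ge> 0")
    case True
    define r1 where "r1 = (t + sqrt D) / 2"
    define r2 where "r2 = (t - sqrt D) / 2"
    have sq: "sqrt D ^ 2 = D" using True by simp
    have "r1^2 - t * r1 + d = 0" "r2^2 - t * r2 + d = 0"
      unfolding r1_def r2_def using sq by (auto simp: D_def power2_eq_square field_simps)
    hence "(complex_of_real r1)^2 - of_real (tr2 A) * of_real r1 + of_real (det2 A) = 0"
          "(complex_of_real r2)^2 - of_real (tr2 A) * of_real r2 + of_real (det2 A) = 0"
      unfolding t_def d_def by (metis of_real_0 of_real_add of_real_diff of_real_mult of_real_power)+
    from hurwitz_root[OF assms this(1)] hurwitz_root[OF assms this(2)]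
    have "r1 < 0" "r2 < 0" by simp_all
    moreover have "t = r1 + r2" "d = r1 * r2"
      unfolding r1_def r2_def using sq by (auto simp: D_def power2_eq_square field_simps)
    ultimately show ?thesis by (simp add: mult_neg_neg)
  next
    case False
    define \<mu> where "\<mu> = Complex (t/2) (sqrt (-D) / 2)"
    have sq: "sqrt (-D) ^ 2 = -D" using False by simp
    have "\<mu>^2 - of_real (tr2 A) * \<mu> + of_real (det2 A) = 0"
      unfolding t_def[symmetric] d_def[symmetric]
      using sq by (simp add: \<mu>_def complex_eq_iff power2_eq_square D_def field_simps Complex_eq)
    from hurwitz_root[OF assms this] have "t < 0" by (simp add: \<mu>_def)
    moreover have "d > 0" using False by (simp add: D_def) (smt (verit) zero_le_power2)
    ultimately show ?thesis by simp
  qed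
  thus "tr2 A < 0" "det2 A > 0" by (simp_all add: t_def d_def)
qed



lemma rec2_induct:
  assumes "P 0" "P 1" "\<And>k. P k \<Longrightarrow> P (Suc k) \<Longrightarrow> P (Suc (Suc k))"
  shows "P k"
proof -
  have "P k \<and> P (Suc k)" by (induction k) (use assms in auto)
  thus ?thesis by simp
qed

lemma exp_sums_real: fixes l t :: real shows "(\<lambda>k. t ^ k / fact k * (l ^ k)) sums exp (l * t)"
proof -
  have "(\<lambda>k. (l * t) ^ k /\<^sub>R fact k) sums exp (l * t)" by (rule exp_converges)
  moreover have "(\<lambda>k. (l * t) ^ k /\<^sub>R fact k) = (\<lambda>k. t ^ k / fact k * (l ^ k))"
    by (rule ext) (simp add: power_mult_distrib divide_inverse ac_simps)
  ultimately show ?thesis by simp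
qed

lemma seq_distinct:
  fixes m :: "nat \<Rightarrow> real"
  assumes rec: "\<And>k. m (Suc (Suc k)) = tau * m (Suc k) - dl * m k"
    and r1: "l1^2 = tau * l1 - dl" and r2: "l2^2 = tau * l2 - dl" and ne: "l1 \<noteq> l2"
  defines "a \<equiv> (m 1 - l2 * m 0) / (l1 - l2)" and "b \<equiv> (l1 * m 0 - m 1) / (l1 - l2)"
  shows "m k = a * l1 ^ k + b * l2 ^ k"
proof (induction k rule: rec2_induct)
  have n: "l1 - l2 \<noteq> 0" using ne by simp
  case 1 show ?case using n by (simp add: a_def b_def divide_simps) (simp add: algebra_simps)
next
  have n: "l1 - l2 \<noteq> 0" using ne by simp
  case 2 show ?case using n by (simp add: a_def b_def divide_simps) (simp add: algebra_simps)
next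
  case (3 k)
  have "m (Suc (Suc k)) = tau * (a * l1 ^ Suc k + b * l2 ^ Suc k) - dl * (a * l1 ^ k + b * l2 ^ k)"
    using rec 3 by simp
  also have "\<dots> = a * l1^k * (tau * l1 - dl) + b * l2^k * (tau * l2 - dl)" by (simp add: algebra_simps)
  also have "\<dots> = a * l1 ^ Suc (Suc k) + b * l2 ^ Suc (Suc k)"
    by (simp only: r1[symmetric] r2[symmetric]) (simp add: power2_eq_square)
  finally show ?case .
qed

lemma sums_distinct:
  fixes a b l1 l2 t :: real shows
  "(\<lambda>k. t ^ k / fact k * (a * l1 ^ k + b * l2 ^ k)) sums (a * exp (l1 * t) + b * exp (l2 * t))"
proof -
  have "(\<lambda>k. a * (t ^ k / fact k * l1 ^ k) + b * (t ^ k / fact k * l2 ^ k)) sums (a * exp (l1 * t) + b * exp (l2 * t))"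
    by (intro sums_add sums_mult exp_sums_real)
  moreover have "(\<lambda>k. a * (t ^ k / fact k * l1 ^ k) + b * (t ^ k / fact k * l2 ^ k)) =
     (\<lambda>k. t ^ k / fact k * (a * l1 ^ k + b * l2 ^ k))" by (rule ext) (simp add: distrib_left ac_simps)
  ultimately show ?thesis by simp
qed

lemma seq_double:
  fixes m :: "nat \<Rightarrow> real"
  assumes rec: "\<And>k. m (Suc (Suc k)) = (2 * l) * m (Suc k) - l^2 * m k"
  defines "a \<equiv> m 0" and "b \<equiv> m 1 - l * m 0"
  shows "m k = a * l ^ k + b * (real k * l ^ (k - 1))"
proof (induction k rule: rec2_induct)
  case 1 show ?case by (simp add: a_def)
next
  case 2 show ?case by (simp add: a_def b_def)
next
  case (3 k)
  have "m (Suc (Suc k)) = 2 * l * (a * l ^ Suc k + b * (real (Suc k) * l ^ k))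
        - l^2 * (a * l ^ k + b * (real k * l ^ (k - 1)))"
    using rec 3 by simp
  also have "\<dots> = a * l ^ Suc (Suc k) + b * (real (Suc (Suc k)) * l ^ Suc k)"
  proof (cases k)
    case 0 thus ?thesis by (simp add: algebra_simps power2_eq_square)
  next
    case (Suc j)
    thus ?thesis by (simp add: algebra_simps power2_eq_square)
  qed
  finally show ?case by simp
qed

lemma sums_double:
  fixes a b l t :: real shows
  "(\<lambda>k. t ^ k / fact k * (a * l ^ k + b * (real k * l ^ (k - 1)))) sums ((a + b * t) * exp (l * t))"
proof -
  have e: "(\<lambda>k. t ^ k / fact k * l ^ k) sums exp (l * t)" by (rule exp_sums_real)
  have "(\<lambda>j. t * (t ^ j / fact j * l ^ j)) sums (t * exp (l * t))" by (rule sums_mult[OF e])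
  moreover have "t * (t ^ j / fact j * l ^ j) = t ^ Suc j / fact (Suc j) * (real (Suc j) * l ^ (Suc j - 1))" for j
  proof -
    have "fact (Suc j) = real (Suc j) * fact j" by simp
    moreover have "real (Suc j) \<noteq> 0" "(fact j :: real) \<noteq> 0" by simp_all
    ultimately show ?thesis by (simp add: divide_simps)
  qed
  ultimately have "(\<lambda>j. (\<lambda>k. t ^ k / fact k * (real k * l ^ (k - 1))) (Suc j)) sums (t * exp (l * t))"
    by simp
  hence s2: "(\<lambda>k. t ^ k / fact k * (real k * l ^ (k - 1))) sums (t * exp (l * t))"
    by (subst (asm) sums_Suc_iff) simp
  have "(\<lambda>k. a * (t ^ k / fact k * l ^ k) + b * (t ^ k / fact k * (real k * l ^ (k - 1))))
        sums (a * exp (l * t) + b * (t * exp (l * t)))"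
    by (intro sums_add sums_mult e s2)
  moreover have "(\<lambda>k. a * (t ^ k / fact k * l ^ k) + b * (t ^ k / fact k * (real k * l ^ (k - 1)))) =
     (\<lambda>k. t ^ k / fact k * (a * l ^ k + b * (real k * l ^ (k - 1))))" by (rule ext) (simp add: algebra_simps)
  ultimately show ?thesis by (simp add: algebra_simps)
qed

lemma seq_complex:
  fixes m :: "nat \<Rightarrow> real" and mu z :: complex
  assumes rec: "\<And>k. m (Suc (Suc k)) = tau * m (Suc k) - dl * m k"
    and r: "mu^2 = of_real tau * mu - of_real dl"
    and z0: "Re z = m 0" and z1: "Re (z * mu) = m 1"
  shows "m k = Re (z * mu ^ k)"
proof (induction k rule: rec2_induct)
  case 1 show ?case using z0 by simp
next
  case 2 show ?case using z1 by simp
next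
  case (3 k)
  have "z * mu ^ Suc (Suc k) = z * mu ^ k * mu^2" by (simp add: power2_eq_square algebra_simps)
  also have "\<dots> = of_real tau * (z * mu ^ Suc k) - of_real dl * (z * mu ^ k)"
    by (simp add: r algebra_simps)
  finally have "Re (z * mu ^ Suc (Suc k)) = tau * Re (z * mu ^ Suc k) - dl * Re (z * mu ^ k)"
    by simp
  thus ?case using rec 3 by simp
qed

lemma sums_complex:
  fixes t :: real and z mu :: complex shows
  "(\<lambda>k. t ^ k / fact k * Re (z * mu ^ k)) sums Re (z * exp (mu * of_real t))"
proof -
  have "(\<lambda>k. (mu * of_real t) ^ k /\<^sub>R fact k) sums exp (mu * of_real t)" by (rule exp_converges)
  hence "(\<lambda>k. z * ((mu * of_real t) ^ k /\<^sub>R fact k)) sums (z * exp (mu * of_real t))" by (rule sums_mult)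
  hence "(\<lambda>k. Re (z * ((mu * of_real t) ^ k /\<^sub>R fact k))) sums Re (z * exp (mu * of_real t))" by (rule sums_Re)
  moreover have "Re (z * ((mu * of_real t) ^ k /\<^sub>R fact k)) = t ^ k / fact k * Re (z * mu ^ k)" for k
  proof -
    have "z * ((mu * of_real t) ^ k /\<^sub>R fact k) = (t ^ k / fact k) *\<^sub>R (z * mu ^ k)"
      by (simp add: power_mult_distrib scaleR_conv_of_real field_simps)
    moreover have "Re (r *\<^sub>R w) = r * Re w" for r w by (simp add: scaleR_conv_of_real)
    ultimately show ?thesis by simp
  qed
  ultimately show ?thesis by simp
qed




lemma qc_from_diff:
  fixes h :: "real \<Rightarrow> real"
  assumes cont: "continuous_on UNIV h"
    and D: "\<And>\<delta> s t. \<delta> > 0 \<Longrightarrow> s < t \<Longrightarrow> h (s + \<delta>) - h s < 0 \<Longrightarrow> h (t + \<delta>) - h t \<le> 0"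
  shows "quasi_concave h"
proof -
  have key: "h w \<ge> min (h x) (h y)" if "x \<le> w" "w \<le> y" for x w y
  proof (rule ccontr)
    assume "\<not> ?thesis"
    hence hw: "h w < h x" "h w < h y" by auto
    define c where "c = (h w + min (h x) (h y)) / 2"
    have c: "h w < c" "c < h x" "c < h y" using hw by (auto simp: c_def)
    define S1 where "S1 = {x..w} \<inter> h -` {c..}"
    define S2 where "S2 = {w..y} \<inter> h -` {c..}"
    have ic: "\<forall>x. isCont h x" using cont by (simp add: continuous_on_eq_continuous_at)
    have cl: "closed (h -` {c..})"
      by (rule continuous_closed_vimage[OF closed_atLeast]) (use ic in auto)
    have cS1: "compact S1" unfolding S1_def
      by (rule compact_Int_closed[OF compact_Icc cl])
    have cS2: "compact S2" unfolding S2_def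
      by (rule compact_Int_closed[OF compact_Icc cl])
    have "x \<in> S1" using c that by (auto simp: S1_def)
    hence ne1: "S1 \<noteq> {}" by auto
    have "y \<in> S2" using c that by (auto simp: S2_def)
    hence ne2: "S2 \<noteq> {}" by auto
    obtain a where a: "a \<in> S1" "\<And>z. z \<in> S1 \<Longrightarrow> z \<le> a"
      using compact_attains_sup[OF cS1 ne1] by blast
    obtain b where b: "b \<in> S2" "\<And>z. z \<in> S2 \<Longrightarrow> b \<le> z"
      using compact_attains_inf[OF cS2 ne2] by blast
    have ha: "h a \<ge> c" and hb: "h b \<ge> c" using a(1) b(1) by (auto simp: S1_def S2_def)
    have "a \<le> w" "w \<le> b" using a(1) b(1) by (auto simp: S1_def S2_def)
    moreover have "a \<noteq> w" "b \<noteq> w" using ha hb c by auto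
    ultimately have ab: "a < w" "w < b" by auto
    have low: "h z < c" if "a < z" "z < b" for z
    proof (cases "z \<le> w")
      case True
      have "x \<le> z" using a(1) that by (auto simp: S1_def)
      hence "z \<notin> S1" using a(2)[of z] that by force
      thus ?thesis using True \<open>x \<le> z\<close> by (auto simp: S1_def)
    next
      case False
      have "z \<le> y" using b(1) that by (auto simp: S2_def)
      hence "z \<notin> S2" using b(2)[of z] that by force
      thus ?thesis using False \<open>z \<le> y\<close> by (auto simp: S2_def)
    qed
    define m where "m = (a + b) / 2"
    define d where "d = (b - a) / 2"
    have d: "d > 0" "a + d = m" "m + d = b" "a < m" using ab by (auto simp: m_def d_def field_simps)
    have hm: "h m < c" using low[of m] d ab by (auto simp: m_def)
    have "h (a + d) - h a < 0" using hm ha d by simp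
    from D[OF d(1) d(4) this] have "h (m + d) - h m \<le> 0" .
    thus False using hm hb d by simp
  qed
  show ?thesis unfolding quasi_concave_def
  proof (intro allI impI)
    fix x y l :: real assume l: "0 \<le> l \<and> l \<le> 1"
    define w where "w = l * x + (1 - l) * y"
    show "min (h x) (h y) \<le> h (l * x + (1 - l) * y)"
    proof (cases "x \<le> y")
      case xy: True
      have e1: "w - x = (1 - l) * (y - x)" and e2: "y - w = l * (y - x)" by (simp_all add: w_def algebra_simps)
      have p1: "(1 - l) * (y - x) \<ge> 0" and p2: "l * (y - x) \<ge> 0" using l xy by simp_all
      have "x \<le> w" using e1 p1 by linarith
      moreover have "w \<le> y" using e2 p2 by linarith
      ultimately show ?thesis using key w_def by auto
    next
      case xy: False
      have e1: "w - y = l * (x - y)" and e2: "x - w = (1 - l) * (x - y)" by (simp_all add: w_def algebra_simps)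
      have p1: "(1 - l) * (x - y) \<ge> 0" and p2: "l * (x - y) \<ge> 0" using l xy by simp_all
      have "y \<le> w" using e1 p2 by linarith
      moreover have "w \<le> x" using e2 p1 by linarith
      ultimately show ?thesis using key[of y w x] w_def by (auto simp: min.commute)
    qed
  qed
qed

lemma qc_diff_sign:
  fixes u :: "real \<Rightarrow> real"
  assumes qc: "quasi_concave u" and d: "\<delta> > 0"
    and neg: "u (t0 + \<delta>) - u t0 < 0" and lt: "t0 < t1"
  shows "u (t1 + \<delta>) - u t1 \<le> 0"
proof (rule ccontr)
  assume "\<not> ?thesis"
  hence pos: "u t1 < u (t1 + \<delta>)" by simp
  have btw: "u y \<ge> min (u x) (u z)" if "x \<le> y" "y \<le> z" for x y z
  proof (cases "x = z")
    case True thus ?thesis using that by auto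
  next
    case False
    hence xz: "x < z" using that by auto
    define l where "l = (z - y) / (z - x)"
    have "0 \<le> l" "l \<le> 1" using that xz by (auto simp: l_def field_simps)
    moreover have "l * (z - x) = z - y" using xz by (simp add: l_def)
    hence "l * x + (1 - l) * z = y" by (simp add: algebra_simps)
    ultimately show ?thesis using qc unfolding quasi_concave_def by (metis)
  qed
  show False
  proof (cases "t1 \<le> t0 + \<delta>")
    case True
    have "u (t0 + \<delta>) \<ge> min (u t0) (u (t1 + \<delta>))" using btw[of t0 "t0 + \<delta>" "t1 + \<delta>"] lt d by auto
    hence a: "u (t0 + \<delta>) \<ge> u (t1 + \<delta>)" using neg by auto
    have "u t1 \<ge> min (u t0) (u (t0 + \<delta>))" using btw[of t0 t1 "t0 + \<delta>"] lt True by auto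
    hence "u t1 \<ge> u (t0 + \<delta>)" using neg by auto
    thus False using a pos by auto
  next
    case False
    have "u t1 \<ge> min (u (t0 + \<delta>)) (u (t1 + \<delta>))" using btw[of "t0 + \<delta>" t1 "t1 + \<delta>"] False d by auto
    hence a: "u t1 \<ge> u (t0 + \<delta>)" using pos by auto
    have "u (t0 + \<delta>) \<ge> min (u t0) (u t1)" using btw[of t0 "t0 + \<delta>" t1] False d by auto
    hence b: "u (t0 + \<delta>) \<ge> u t1" using neg by auto
    have "u t1 \<ge> min (u t0) (u (t1 + \<delta>))" using btw[of t0 t1 "t1 + \<delta>"] lt d by auto
    thus False using a b neg pos by auto
  qed
qed



lemma tp2_sign:
  fixes g \<phi> :: "real \<Rightarrow> real"
  assumes gnn: "\<And>x. g x \<ge> 0" and g0: "\<And>x. x < 0 \<Longrightarrow> g x = 0" and gpos: "\<And>x. x > 0 \<Longrightarrow> g x > 0"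
    and tp2: "\<And>a b d. a \<le> b \<Longrightarrow> b \<le> d \<Longrightarrow> g a * g d \<le> g b * g (a + d - b)"
    and ph: "\<And>t0 t1. \<phi> t0 < 0 \<Longrightarrow> t0 < t1 \<Longrightarrow> \<phi> t1 \<le> 0"
    and int: "\<And>t. integrable lborel (\<lambda>\<tau>. g (t - \<tau>) * \<phi> \<tau>)"
    and st: "s < t" and Hs: "(LINT \<tau>|lborel. g (s - \<tau>) * \<phi> \<tau>) < 0"
  shows "(LINT \<tau>|lborel. g (t - \<tau>) * \<phi> \<tau>) \<le> 0"
proof -
  have main: "(LINT \<tau>|lborel. g (t - \<tau>) * \<phi> \<tau>) \<le> 0"
    if p1: "\<And>\<tau>. \<tau> < p \<Longrightarrow> \<phi> \<tau> \<ge> 0" and p2: "\<And>\<tau>. \<tau> > p \<Longrightarrow> \<phi> \<tau> \<le> 0" for p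
  proof (cases "g (s - p) > 0")
    case True
    define r where "r = g (t - p) / g (s - p)"
    have r0: "r \<ge> 0" using gnn True by (simp add: r_def)
    have pt: "g (t - \<tau>) * \<phi> \<tau> \<le> r * (g (s - \<tau>) * \<phi> \<tau>)" for \<tau>
    proof -
      consider "\<tau> < p" | "\<tau> = p" | "\<tau> > p" by linarith
      then show ?thesis
      proof cases
        case 1
        have "g (s - p) * g (t - \<tau>) \<le> g (s - \<tau>) * g (s - p + (t - \<tau>) - (s - \<tau>))"
          by (rule tp2) (use 1 st in auto)
        hence "g (s - p) * g (t - \<tau>) \<le> g (s - \<tau>) * g (t - p)" by simp
        hence "g (t - \<tau>) \<le> r * g (s - \<tau>)" using True
          by (simp add: r_def field_simps)
        thus ?thesis using p1[OF 1] by (metis mult.assoc mult_right_mono)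
      next
        case 2
        thus ?thesis using True by (simp add: r_def)
      next
        case 3
        have "g (s - \<tau>) * g (t - p) \<le> g (s - p) * g (s - \<tau> + (t - p) - (s - p))"
          by (rule tp2) (use 3 st in auto)
        hence "g (s - \<tau>) * g (t - p) \<le> g (s - p) * g (t - \<tau>)" by simp
        hence "r * g (s - \<tau>) \<le> g (t - \<tau>)" using True
          by (simp add: r_def field_simps)
        thus ?thesis using p2[OF 3] by (metis mult.assoc mult_right_mono_neg)
      qed
    qed
    have "(LINT \<tau>|lborel. g (t - \<tau>) * \<phi> \<tau>) \<le> (LINT \<tau>|lborel. r * (g (s - \<tau>) * \<phi> \<tau>))"
      by (rule integral_mono) (use int pt in auto)
    also have "\<dots> = r * (LINT \<tau>|lborel. g (s - \<tau>) * \<phi> \<tau>)" by simp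
    also have "\<dots> \<le> 0" using r0 Hs by (simp add: mult_nonneg_nonpos)
    finally show ?thesis .
  next
    case False
    hence "g (s - p) = 0" using gnn[of "s - p"] by linarith
    hence sp: "s \<le> p" using gpos[of "s - p"] by (cases "s - p > 0") auto
    have "g (s - \<tau>) * \<phi> \<tau> \<ge> 0" for \<tau>
    proof (cases "\<tau> < p")
      case True thus ?thesis using p1 gnn by simp
    next
      case False
      show ?thesis
      proof (cases "\<tau> = s")
        case True
        hence "\<tau> = p" using sp False by simp
        thus ?thesis using \<open>g (s - p) = 0\<close> True by simp
      next
        case False
        hence "s - \<tau> < 0" using sp \<open>\<not> \<tau> < p\<close> by simp
        thus ?thesis using g0 by simp
      qed
    qed
    hence "(LINT \<tau>|lborel. g (s - \<tau>) * \<phi> \<tau>) \<ge> 0" by (simp add: integral_nonneg_AE)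
    thus ?thesis using Hs by simp
  qed
  define N where "N = {\<tau>. \<phi> \<tau> < 0}"
  show ?thesis
  proof (cases "\<forall>\<tau>. \<phi> \<tau> \<ge> 0")
    case True
    hence "(LINT \<tau>|lborel. g (s - \<tau>) * \<phi> \<tau>) \<ge> 0" using gnn by (simp add: integral_nonneg_AE)
    thus ?thesis using Hs by simp
  next
    case False
    then obtain z where z: "\<phi> z < 0" by (auto simp: not_le)
    show ?thesis
    proof (cases "bdd_below N")
      case False
      have "\<phi> \<tau> \<le> 0" for \<tau>
      proof -
        from False obtain y where "y \<in> N" "y < \<tau>" unfolding bdd_below_def by (meson not_le)
        thus ?thesis using ph by (auto simp: N_def)
      qed
      hence np: "g (t - \<tau>) * \<phi> \<tau> \<le> 0" for \<tau> using gnn by (simp add: mult_nonneg_nonpos)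
      have "0 \<le> (LINT \<tau>|lborel. - (g (t - \<tau>) * \<phi> \<tau>))"
        by (rule integral_nonneg_AE) (use np in auto)
      thus ?thesis by (simp only: integral_minus)
    next
      case True
      have Nne: "N \<noteq> {}" using z by (auto simp: N_def)
      show ?thesis
      proof (rule main[of "Inf N"])
        fix \<tau> assume "\<tau> < Inf N"
        hence "\<tau> \<notin> N" using cInf_lower[OF _ True] by force
        thus "\<phi> \<tau> \<ge> 0" by (auto simp: N_def)
      next
        fix \<tau> assume "\<tau> > Inf N"
        then obtain y where "y \<in> N" "y < \<tau>" using cInf_less_iff[OF Nne True] by auto
        thus "\<phi> \<tau> \<le> 0" using ph by (auto simp: N_def)
      qed
    qed
  qed
qed



lemma shift_int:
  fixes g u :: "real \<Rightarrow> real"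
  assumes I: "\<And>t. integrable lborel (\<lambda>\<tau>. g (t - \<tau>) * u \<tau>)"
  shows "integrable lborel (\<lambda>\<tau>. g (t - \<tau>) * u (\<tau> + \<delta>))"
    and "(LINT \<tau>|lborel. g (t - \<tau>) * u (\<tau> + \<delta>)) = convolution g u (t + \<delta>)"
proof -
  define f where "f = (\<lambda>\<sigma>. g (t + \<delta> - \<sigma>) * u \<sigma>)"
  have eq: "(\<lambda>x. f (\<delta> + 1 * x)) = (\<lambda>\<tau>. g (t - \<tau>) * u (\<tau> + \<delta>))"
    by (auto simp: f_def add.commute fun_eq_iff)
  have fi: "integrable lborel f" using I[of "t + \<delta>"] by (simp add: f_def)
  show "integrable lborel (\<lambda>\<tau>. g (t - \<tau>) * u (\<tau> + \<delta>))"
    using lborel_integrable_real_affine[OF fi, of 1 \<delta>] eq by simp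
  have "integral\<^sup>L lborel f = \<bar>1::real\<bar> *\<^sub>R integral\<^sup>L lborel (\<lambda>x. f (\<delta> + 1 * x))"
    by (rule lborel_integral_real_affine) simp
  thus "(LINT \<tau>|lborel. g (t - \<tau>) * u (\<tau> + \<delta>)) = convolution g u (t + \<delta>)"
    using eq by (simp add: convolution_def f_def)
qed

lemma abs_su:
  fixes g u :: "real \<Rightarrow> real"
  assumes gnn: "\<And>x. g x \<ge> 0" and g0: "\<And>x. x < 0 \<Longrightarrow> g x = 0" and gpos: "\<And>x. x > 0 \<Longrightarrow> g x > 0"
    and tp2: "\<And>a b d. a \<le> b \<Longrightarrow> b \<le> d \<Longrightarrow> g a * g d \<le> g b * g (a + d - b)"
    and cont: "continuous_on UNIV (convolution g u)"
    and qc: "quasi_concave u" and I: "\<And>t. integrable lborel (\<lambda>\<tau>. g (t - \<tau>) * u \<tau>)"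
  shows "quasi_concave (convolution g u)"
proof (rule qc_from_diff[OF cont])
  fix \<delta> s t :: real
  assume d: "\<delta> > 0" and st: "s < t"
    and neg: "convolution g u (s + \<delta>) - convolution g u s < 0"
  define \<phi> where "\<phi> = (\<lambda>\<tau>. u (\<tau> + \<delta>) - u \<tau>)"
  have int: "integrable lborel (\<lambda>\<tau>. g (t' - \<tau>) * \<phi> \<tau>)" for t'
    using Bochner_Integration.integrable_diff[OF shift_int(1)[OF I, of t' \<delta>] I[of t']]
    by (simp add: \<phi>_def algebra_simps)
  have eqH: "(LINT \<tau>|lborel. g (t' - \<tau>) * \<phi> \<tau>) = convolution g u (t' + \<delta>) - convolution g u t'" for t'
  proof -
    have "(LINT \<tau>|lborel. g (t' - \<tau>) * \<phi> \<tau>) =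
          (LINT \<tau>|lborel. g (t' - \<tau>) * u (\<tau> + \<delta>) - g (t' - \<tau>) * u \<tau>)"
      by (simp add: \<phi>_def algebra_simps)
    also have "\<dots> = (LINT \<tau>|lborel. g (t' - \<tau>) * u (\<tau> + \<delta>)) - (LINT \<tau>|lborel. g (t' - \<tau>) * u \<tau>)"
      by (rule Bochner_Integration.integral_diff[OF shift_int(1)[OF I] I])
    also have "\<dots> = convolution g u (t' + \<delta>) - convolution g u t'"
      using shift_int(2)[OF I, of t' \<delta>] by (simp add: convolution_def)
    finally show ?thesis .
  qed
  have ph: "\<phi> t1 \<le> 0" if "\<phi> t0 < 0" "t0 < t1" for t0 t1
    using qc_diff_sign[OF qc d, of t0 t1] that by (simp add: \<phi>_def)
  have "(LINT \<tau>|lborel. g (t - \<tau>) * \<phi> \<tau>) \<le> 0"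
    by (rule tp2_sign[OF gnn g0 gpos tp2 ph int st]) (use neg eqH in auto)
  thus "convolution g u (t + \<delta>) - convolution g u t \<le> 0" using eqH by simp
qed



lemma indef_cont:
  fixes f :: "real \<Rightarrow> real"
  assumes I: "\<And>t. integrable lborel (\<lambda>\<tau>. indicator {..t} \<tau> * f \<tau>)"
  shows "continuous_on UNIV (\<lambda>t. LINT \<tau>|lborel. indicator {..t} \<tau> * f \<tau>)"
proof (rule continuous_on_sequentiallyI)
  fix x :: "nat \<Rightarrow> real" and a :: real assume lim: "x \<longlonglongrightarrow> a"
  define M where "M = a + 1"
  define s where "s = (\<lambda>n \<tau>. indicator {..min (x n) M} \<tau> * f \<tau>)"
  have conv: "(\<lambda>n. integral\<^sup>L lborel (s n)) \<longlonglongrightarrow> (LINT \<tau>|lborel. indicator {..a} \<tau> * f \<tau>)"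
  proof (rule integral_dominated_convergence[where w="\<lambda>\<tau>. \<bar>indicator {..M} \<tau> * f \<tau>\<bar>"])
    show "(\<lambda>\<tau>. indicator {..a} \<tau> * f \<tau>) \<in> borel_measurable lborel"
      using I[of a] by (rule borel_measurable_integrable)
    show "s n \<in> borel_measurable lborel" for n
      using I[of "min (x n) M"] unfolding s_def by (rule borel_measurable_integrable)
    show "integrable lborel (\<lambda>\<tau>. \<bar>indicator {..M} \<tau> * f \<tau>\<bar>)"
      using I[of M] by (rule integrable_abs)
    show "AE \<tau> in lborel. norm (s n \<tau>) \<le> \<bar>indicator {..M} \<tau> * f \<tau>\<bar>" for n
      by (rule AE_I2) (auto simp: s_def indicator_def abs_mult)
    show "AE \<tau> in lborel. (\<lambda>n. s n \<tau>) \<longlonglongrightarrow> indicator {..a} \<tau> * f \<tau>"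
      using AE_lborel_singleton[of a]
    proof eventually_elim
      case (elim \<tau>)
      show ?case
      proof (cases "\<tau> < a")
        case True
        have "eventually (\<lambda>n. x n > \<tau>) sequentially" using order_tendstoD(1)[OF lim True] .
        hence "eventually (\<lambda>n. s n \<tau> = indicator {..a} \<tau> * f \<tau>) sequentially"
          by eventually_elim (use True in \<open>auto simp: s_def M_def indicator_def\<close>)
        thus ?thesis by (rule tendsto_eventually)
      next
        case False
        hence ta: "\<tau> > a" using elim by simp
        have "eventually (\<lambda>n. x n < \<tau>) sequentially" using order_tendstoD(2)[OF lim ta] .
        hence "eventually (\<lambda>n. s n \<tau> = indicator {..a} \<tau> * f \<tau>) sequentially"
          by eventually_elim (use ta in \<open>auto simp: s_def M_def indicator_def\<close>)
        thus ?thesis by (rule tendsto_eventually)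
      qed
    qed
  qed
  have "eventually (\<lambda>n. x n < M) sequentially" using order_tendstoD(2)[OF lim, of M] by (simp add: M_def)
  hence "eventually (\<lambda>n. integral\<^sup>L lborel (s n) = (LINT \<tau>|lborel. indicator {..x n} \<tau> * f \<tau>)) sequentially"
    by eventually_elim (simp add: s_def)
  thus "(\<lambda>n. LINT \<tau>|lborel. indicator {..x n} \<tau> * f \<tau>) \<longlonglongrightarrow> (LINT \<tau>|lborel. indicator {..a} \<tau> * f \<tau>)"
    by (rule Lim_transform_eventually[OF conv])
qed

lemma conv_cont_sep:
  fixes g u pa pb qa qb :: "real \<Rightarrow> real"
  assumes g0: "\<And>x. x < 0 \<Longrightarrow> g x = 0"
    and sep: "\<And>t \<tau>. \<tau> \<le> t \<Longrightarrow> g (t - \<tau>) = pa t * qa \<tau> + pb t * qb \<tau>"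
    and c1: "continuous_on UNIV pa" and c2: "continuous_on UNIV pb"
    and i1: "\<And>t. integrable lborel (\<lambda>\<tau>. indicator {..t} \<tau> * (qa \<tau> * u \<tau>))"
    and i2: "\<And>t. integrable lborel (\<lambda>\<tau>. indicator {..t} \<tau> * (qb \<tau> * u \<tau>))"
  shows "continuous_on UNIV (convolution g u)"
proof -
  have eq: "convolution g u t = pa t * (LINT \<tau>|lborel. indicator {..t} \<tau> * (qa \<tau> * u \<tau>)) +
                                  pb t * (LINT \<tau>|lborel. indicator {..t} \<tau> * (qb \<tau> * u \<tau>))" for t
  proof -
    have "(\<lambda>\<tau>. g (t - \<tau>) * u \<tau>) = (\<lambda>\<tau>. pa t * (indicator {..t} \<tau> * (qa \<tau> * u \<tau>)) + pb t * (indicator {..t} \<tau> * (qb \<tau> * u \<tau>)))"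
    proof (rule ext)
      fix \<tau> show "g (t - \<tau>) * u \<tau> = pa t * (indicator {..t} \<tau> * (qa \<tau> * u \<tau>)) + pb t * (indicator {..t} \<tau> * (qb \<tau> * u \<tau>))"
        by (cases "\<tau> \<le> t") (auto simp: sep g0 algebra_simps)
    qed
    hence "convolution g u t = (LINT \<tau>|lborel. pa t * (indicator {..t} \<tau> * (qa \<tau> * u \<tau>)) + pb t * (indicator {..t} \<tau> * (qb \<tau> * u \<tau>)))"
      by (simp add: convolution_def)
    also have "\<dots> = pa t * (LINT \<tau>|lborel. indicator {..t} \<tau> * (qa \<tau> * u \<tau>)) + pb t * (LINT \<tau>|lborel. indicator {..t} \<tau> * (qb \<tau> * u \<tau>))"
      using i1[of t] i2[of t] by simp
    finally show ?thesis .
  qed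
  show ?thesis unfolding eq[abs_def]
    by (intro continuous_intros c1 c2 indef_cont i1 i2)
qed

lemma sep_integrable:
  fixes g u pa pb qa qb :: "real \<Rightarrow> real"
  assumes sep: "\<And>t \<tau>. \<tau> \<le> t \<Longrightarrow> g (t - \<tau>) = pa t * qa \<tau> + pb t * qb \<tau>"
    and I: "\<And>t. integrable lborel (\<lambda>\<tau>. g (t - \<tau>) * u \<tau>)"
    and det: "pa t * pb (t + 1) - pb t * pa (t + 1) \<noteq> 0"
  shows "integrable lborel (\<lambda>\<tau>. indicator {..t} \<tau> * (qa \<tau> * u \<tau>))"
    and "integrable lborel (\<lambda>\<tau>. indicator {..t} \<tau> * (qb \<tau> * u \<tau>))"
proof -
  define D where "D = pa t * pb (t + 1) - pb t * pa (t + 1)"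
  have ia: "integrable lborel (\<lambda>\<tau>. indicator {..t} \<tau> *\<^sub>R (g (t - \<tau>) * u \<tau>))"
    by (rule integrable_mult_indicator[OF _ I]) simp
  have ib: "integrable lborel (\<lambda>\<tau>. indicator {..t} \<tau> *\<^sub>R (g (t + 1 - \<tau>) * u \<tau>))"
    by (rule integrable_mult_indicator[OF _ I]) simp
  have "integrable lborel (\<lambda>\<tau>. (pb (t + 1) * (indicator {..t} \<tau> *\<^sub>R (g (t - \<tau>) * u \<tau>)) -
          pb t * (indicator {..t} \<tau> *\<^sub>R (g (t + 1 - \<tau>) * u \<tau>))) / D)"
    using ia ib by (intro integrable_divide Bochner_Integration.integrable_diff integrable_mult_right)
  moreover have "(\<lambda>\<tau>. (pb (t + 1) * (indicator {..t} \<tau> *\<^sub>R (g (t - \<tau>) * u \<tau>)) -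
          pb t * (indicator {..t} \<tau> *\<^sub>R (g (t + 1 - \<tau>) * u \<tau>))) / D) = (\<lambda>\<tau>. indicator {..t} \<tau> * (qa \<tau> * u \<tau>))"
  proof (rule ext)
    fix \<tau> show "(pb (t + 1) * (indicator {..t} \<tau> *\<^sub>R (g (t - \<tau>) * u \<tau>)) -
          pb t * (indicator {..t} \<tau> *\<^sub>R (g (t + 1 - \<tau>) * u \<tau>))) / D = indicator {..t} \<tau> * (qa \<tau> * u \<tau>)"
    proof (cases "\<tau> \<le> t")
      case True
      hence "\<tau> \<le> t + 1" by simp
      thus ?thesis using True det sep[of \<tau> t] sep[of \<tau> "t + 1"]
        by (simp add: D_def field_simps)
    qed simp
  qed
  ultimately show "integrable lborel (\<lambda>\<tau>. indicator {..t} \<tau> * (qa \<tau> * u \<tau>))" by simp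
  have "integrable lborel (\<lambda>\<tau>. (pa t * (indicator {..t} \<tau> *\<^sub>R (g (t + 1 - \<tau>) * u \<tau>)) -
          pa (t + 1) * (indicator {..t} \<tau> *\<^sub>R (g (t - \<tau>) * u \<tau>))) / D)"
    using ia ib by (intro integrable_divide Bochner_Integration.integrable_diff integrable_mult_right)
  moreover have "(\<lambda>\<tau>. (pa t * (indicator {..t} \<tau> *\<^sub>R (g (t + 1 - \<tau>) * u \<tau>)) -
          pa (t + 1) * (indicator {..t} \<tau> *\<^sub>R (g (t - \<tau>) * u \<tau>))) / D) = (\<lambda>\<tau>. indicator {..t} \<tau> * (qb \<tau> * u \<tau>))"
  proof (rule ext)
    fix \<tau> show "(pa t * (indicator {..t} \<tau> *\<^sub>R (g (t + 1 - \<tau>) * u \<tau>)) -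
          pa (t + 1) * (indicator {..t} \<tau> *\<^sub>R (g (t - \<tau>) * u \<tau>))) / D = indicator {..t} \<tau> * (qb \<tau> * u \<tau>)"
    proof (cases "\<tau> \<le> t")
      case True
      hence "\<tau> \<le> t + 1" by simp
      thus ?thesis using True det sep[of \<tau> t] sep[of \<tau> "t + 1"]
        by (simp add: D_def field_simps)
    qed simp
  qed
  ultimately show "integrable lborel (\<lambda>\<tau>. indicator {..t} \<tau> * (qb \<tau> * u \<tau>))" by simp
qed




lemma int_g_ind:
  fixes g w :: "real \<Rightarrow> real"
  assumes g0: "\<And>x. x < 0 \<Longrightarrow> g x = 0" and gc: "continuous_on {0..} g"
    and wc: "continuous_on UNIV w"
  shows "integrable lborel (\<lambda>\<tau>. g (t - \<tau>) * (indicator {a..} \<tau> * w \<tau>))"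
proof -
  define G where "G = (\<lambda>x. g (max x 0))"
  have Gc: "continuous_on UNIV G" unfolding G_def
    by (rule continuous_on_compose2[OF gc]) (auto intro!: continuous_intros)
  have eq: "g (t - \<tau>) * (indicator {a..} \<tau> * w \<tau>) = indicator {a..t} \<tau> *\<^sub>R (G (t - \<tau>) * w \<tau>)" for \<tau>
    by (cases "\<tau> \<le> t"; cases "a \<le> \<tau>") (auto simp: G_def g0 indicator_def)
  have "integrable lborel (\<lambda>\<tau>. indicator {a..t} \<tau> *\<^sub>R (G (t - \<tau>) * w \<tau>))"
    by (rule borel_integrable_compact) (auto intro!: continuous_intros continuous_on_compose2[OF Gc] continuous_on_subset[OF wc])
  moreover have "(\<lambda>\<tau>. g (t - \<tau>) * (indicator {a..} \<tau> * w \<tau>)) = (\<lambda>\<tau>. indicator {a..t} \<tau> *\<^sub>R (G (t - \<tau>) * w \<tau>))"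
    by (rule ext) (rule eq)
  ultimately show ?thesis by (simp only:)
qed

lemma int_g_ind2:
  fixes g :: "real \<Rightarrow> real"
  assumes g0: "\<And>x. x < 0 \<Longrightarrow> g x = 0" and gc: "continuous_on {0..} g"
  shows "integrable lborel (\<lambda>\<tau>. g (t - \<tau>) * indicator {a..b} \<tau>)"
proof -
  define G where "G = (\<lambda>x. g (max x 0))"
  have Gc: "continuous_on UNIV G" unfolding G_def
    by (rule continuous_on_compose2[OF gc]) (auto intro!: continuous_intros)
  have eq: "g (t - \<tau>) * indicator {a..b} \<tau> = indicator {a..min b t} \<tau> *\<^sub>R (G (t - \<tau>))" for \<tau>
    by (cases "\<tau> \<le> t"; cases "a \<le> \<tau>"; cases "\<tau> \<le> b") (auto simp: G_def g0 indicator_def)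
  have "integrable lborel (\<lambda>\<tau>. indicator {a..min b t} \<tau> *\<^sub>R (G (t - \<tau>)))"
    by (rule borel_integrable_compact) (auto intro!: continuous_intros continuous_on_compose2[OF Gc])
  moreover have "(\<lambda>\<tau>. g (t - \<tau>) * indicator {a..b} \<tau>) = (\<lambda>\<tau>. indicator {a..min b t} \<tau> *\<^sub>R (G (t - \<tau>)))"
    by (rule ext) (rule eq)
  ultimately show ?thesis by (simp only:)
qed

lemma qc_indicator: "quasi_concave (indicator {a..b} :: real \<Rightarrow> real)"
  unfolding quasi_concave_def
proof (intro allI impI)
  fix x y l :: real assume l: "0 \<le> l \<and> l \<le> 1"
  show "min (indicator {a..b} x) (indicator {a..b} y) \<le> (indicator {a..b} (l * x + (1 - l) * y) :: real)"
  proof (cases "x \<in> {a..b} \<and> y \<in> {a..b}")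
    case True
    have "l * x + (1 - l) * y \<ge> l * a + (1 - l) * a"
      using True l by (intro add_mono mult_left_mono) auto
    moreover have "l * x + (1 - l) * y \<le> l * b + (1 - l) * b"
      using True l by (intro add_mono mult_left_mono) auto
    ultimately have "l * x + (1 - l) * y \<in> {a..b}" by (simp add: algebra_simps)
    thus ?thesis using True by (simp add: indicator_def)
  next
    case False thus ?thesis by (auto simp: indicator_def)
  qed
qed

lemma neg_not_su:
  fixes g :: "real \<Rightarrow> real"
  assumes g0: "\<And>x. x < 0 \<Longrightarrow> g x = 0" and gc: "continuous_on {0..} g"
    and lim: "(g \<longlongrightarrow> 0) at_top" and neg: "g t1 < 0"
  shows "\<exists>u. quasi_concave u \<and> (\<forall>t. integrable lborel (\<lambda>\<tau>. g (t - \<tau>) * u \<tau>)) \<and>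
             \<not> quasi_concave (convolution g u)"
proof -
  define v where "v = g t1"
  have v: "v < 0" using neg by (simp add: v_def)
  have t1: "t1 \<ge> 0" using neg g0 by (cases "t1 < 0") auto
  obtain e1 where e1: "e1 > 0" "\<And>x. x \<in> {0..} \<Longrightarrow> dist x t1 < e1 \<Longrightarrow> dist (g x) (g t1) < - v / 2"
    using gc t1 v unfolding continuous_on_iff by (metis atLeast_iff neg_0_less_iff_less half_gt_zero)
  define \<epsilon> where "\<epsilon> = e1 / 2"
  define t0 where "t0 = t1 + \<epsilon>"
  have eps: "\<epsilon> > 0" using e1 by (simp add: \<epsilon>_def)
  have low: "g x \<le> v / 2" if "t0 - \<epsilon> \<le> x" "x \<le> t0" for x
  proof -
    have "x \<in> {0..}" "dist x t1 < e1" using that t1 eps by (auto simp: t0_def \<epsilon>_def dist_real_def)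
    from e1(2)[OF this] show ?thesis by (auto simp: v_def dist_real_def)
  qed
  obtain X where X: "\<And>x. x \<ge> X \<Longrightarrow> g x > v / 4"
  proof -
    have "eventually (\<lambda>x. g x > v / 4) at_top" using order_tendstoD(1)[OF lim, of "v/4"] v by simp
    thus ?thesis using that by (auto simp: eventually_at_top_linorder)
  qed
  define T where "T = max X t0 + \<epsilon> + 1"
  have T: "T > t0" "T - \<epsilon> \<ge> X" using eps by (auto simp: T_def)
  define u :: "real \<Rightarrow> real" where "u = indicator {0..\<epsilon>}"
  have qc: "quasi_concave u" unfolding u_def by (rule qc_indicator)
  have int: "integrable lborel (\<lambda>\<tau>. g (t - \<tau>) * u \<tau>)" for t
    unfolding u_def by (rule int_g_ind2[OF g0 gc])
  define h where "h = convolution g u"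
  have hm1: "h (-1) = 0"
  proof -
    have "(\<lambda>\<tau>. g (-1 - \<tau>) * u \<tau>) = (\<lambda>\<tau>. 0)"
    proof (rule ext)
      fix \<tau> :: real show "g (-1 - \<tau>) * u \<tau> = 0" by (cases "\<tau> \<ge> 0") (auto simp: u_def g0)
    qed
    thus ?thesis by (simp add: h_def convolution_def)
  qed
  have meas: "(LINT \<tau>|lborel. indicator {0..\<epsilon>} \<tau> * c) = \<epsilon> * c" for c :: real
    using eps by simp
  have ht0: "h t0 \<le> \<epsilon> * (v / 2)"
  proof -
    have "h t0 \<le> (LINT \<tau>|lborel. indicator {0..\<epsilon>} \<tau> * (v / 2))"
      unfolding h_def convolution_def
    proof (rule integral_mono[OF int])
      show "integrable lborel (\<lambda>\<tau>. indicator {0..\<epsilon>} \<tau> * (v / 2))" using eps by simp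
      fix \<tau> show "g (t0 - \<tau>) * u \<tau> \<le> indicator {0..\<epsilon>} \<tau> * (v / 2)"
        using low[of "t0 - \<tau>"] by (auto simp: u_def indicator_def)
    qed
    with meas[of "v / 2"] show ?thesis by linarith
  qed
  have hT: "h T \<ge> \<epsilon> * (v / 4)"
  proof -
    have "(LINT \<tau>|lborel. indicator {0..\<epsilon>} \<tau> * (v / 4)) \<le> h T"
      unfolding h_def convolution_def
    proof (rule integral_mono[OF _ int])
      show "integrable lborel (\<lambda>\<tau>. indicator {0..\<epsilon>} \<tau> * (v / 4))" using eps by simp
      fix \<tau> show "indicator {0..\<epsilon>} \<tau> * (v / 4) \<le> g (T - \<tau>) * u \<tau>"
        using X[of "T - \<tau>"] T by (auto simp: u_def indicator_def)
    qed
    with meas[of "v / 4"] show ?thesis by linarith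
  qed
  have "\<not> quasi_concave h"
  proof
    assume "quasi_concave h"
    define l where "l = (T - t0) / (T + 1)"
    have Tp: "T + 1 > 0" using T t1 eps by (simp add: t0_def)
    have l: "0 \<le> l" "l \<le> 1" using T Tp t1 eps by (auto simp: l_def t0_def field_simps)
    have e: "1 - l = (t0 + 1) / (T + 1)" using Tp by (simp add: l_def field_simps)
    have "l * (-1) + (1 - l) * T = (1 - l) * (T + 1) - 1" by (simp add: algebra_simps)
    also have "\<dots> = t0" using Tp e by simp
    finally have "l * (-1) + (1 - l) * T = t0" .
    hence "h t0 \<ge> min (h (-1)) (h T)"
      using \<open>quasi_concave h\<close> l unfolding quasi_concave_def by metis
    moreover have "\<epsilon> * (v / 2) < \<epsilon> * (v / 4)" using eps v by simp
    moreover have "\<epsilon> * (v / 2) < 0" using eps v by (simp add: mult_pos_neg)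
    ultimately show False using ht0 hT hm1 by linarith
  qed
  thus ?thesis using qc int by (auto simp: h_def)
qed



lemma int_ind_cont:
  fixes f :: "real \<Rightarrow> real"
  assumes "continuous_on UNIV f"
  shows "integrable lborel (\<lambda>x. indicator {a..b} x * f x)"
  using borel_integrable_compact[of "{a..b}" f] assms continuous_on_subset by force

lemma int_exp_shift:
  fixes a b t l :: real
  assumes ab: "a \<le> b" and l: "l \<noteq> 0"
  shows "(LINT x|lborel. indicator {a..b} x * exp (l * (t - x))) = (exp (l * (t - a)) - exp (l * (t - b))) / l"
proof -
  have "(LINT x|lborel. indicator {a..b} x *\<^sub>R exp (l * (t - x))) =
        (- exp (l * (t - b)) / l) - (- exp (l * (t - a)) / l)"
  proof (rule integral_FTC_atLeastAtMost[OF ab])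
    fix x assume "a \<le> x" "x \<le> b"
    have "((\<lambda>x. - exp (l * (t - x)) / l) has_real_derivative (- (exp (l * (t - x)) * (l * (0 - 1))) / l)) (at x within {a..b})"
      using l by (intro derivative_eq_intros) auto
    thus "((\<lambda>x. - exp (l * (t - x)) / l) has_vector_derivative exp (l * (t - x))) (at x within {a..b})"
      using l by (simp add: has_real_derivative_iff_has_vector_derivative[symmetric])
  next
    show "continuous_on {a..b} (\<lambda>x. exp (l * (t - x)))" by (intro continuous_intros)
  qed
  thus ?thesis by (simp add: diff_divide_distrib)
qed



lemma qc_between:
  fixes u :: "real \<Rightarrow> real"
  assumes "\<And>x y w. x \<le> w \<Longrightarrow> w \<le> y \<Longrightarrow> u w \<ge> min (u x) (u y)"
  shows "quasi_concave u"
  unfolding quasi_concave_def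
proof (intro allI impI)
  fix x y l :: real assume l: "0 \<le> l \<and> l \<le> 1"
  define w where "w = l * x + (1 - l) * y"
  show "min (u x) (u y) \<le> u (l * x + (1 - l) * y)"
  proof (cases "x \<le> y")
    case xy: True
    have e1: "w - x = (1 - l) * (y - x)" and e2: "y - w = l * (y - x)" by (simp_all add: w_def algebra_simps)
    have p1: "(1 - l) * (y - x) \<ge> 0" and p2: "l * (y - x) \<ge> 0" using l xy by simp_all
    have "x \<le> w" using e1 p1 by linarith
    moreover have "w \<le> y" using e2 p2 by linarith
    ultimately show ?thesis using assms w_def by auto
  next
    case xy: False
    have e1: "w - y = l * (x - y)" and e2: "x - w = (1 - l) * (x - y)" by (simp_all add: w_def algebra_simps)
    have p1: "(1 - l) * (x - y) \<ge> 0" and p2: "l * (x - y) \<ge> 0" using l xy by simp_all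
    have "y \<le> w" using e1 p2 by linarith
    moreover have "w \<le> x" using e2 p1 by linarith
    ultimately show ?thesis using assms[of y w x] w_def by (auto simp: min.commute)
  qed
qed

lemma qc_step:
  fixes k :: real assumes k: "k \<ge> 0"
  shows "quasi_concave (\<lambda>\<tau>. k * indicator {0..} \<tau> + indicator {0..1} \<tau>)"
proof (rule qc_between)
  fix x y w :: real assume xw: "x \<le> w" and wy: "w \<le> y"
  let ?u = "\<lambda>\<tau>::real. k * indicator {0..} \<tau> + indicator {0..1} \<tau> :: real"
  show "min (?u x) (?u y) \<le> ?u w"
  proof (cases "x < 0")
    case True
    hence "?u x = 0" by simp
    moreover have "?u w \<ge> 0" using k by simp
    ultimately show ?thesis by simp
  next
    case False
    hence w0: "w \<ge> 0" using xw by simp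
    show ?thesis
    proof (cases "y > 1")
      case True
      hence "?u y = k" by simp
      moreover have "?u w \<ge> k" using w0 by simp
      ultimately show ?thesis by simp
    next
      case False
      hence "w \<in> {0..1}" using w0 wy by simp
      hence "?u w = k + 1" using w0 by simp
      moreover have "?u x \<le> k + 1" using k by (simp add: indicator_def)
      ultimately show ?thesis by simp
    qed
  qed
qed

lemma logconvex_not_su:
  fixes g :: "real \<Rightarrow> real" and al be l1 l2 :: real
  assumes g0: "\<And>x. x < 0 \<Longrightarrow> g x = 0"
    and gf: "\<And>x. x \<ge> 0 \<Longrightarrow> g x = al * exp (l1 * x) + be * exp (l2 * x)"
    and al: "al > 0" and be: "be > 0" and l12: "l2 < l1" and l1: "l1 < 0"
  shows "\<exists>u. quasi_concave u \<and> (\<forall>t. integrable lborel (\<lambda>\<tau>. g (t - \<tau>) * u \<tau>)) \<and>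
             \<not> quasi_concave (convolution g u)"
proof -
  define G where "G = (\<lambda>x. al * exp (l1 * x) + be * exp (l2 * x))"
  have l2: "l2 < 0" using l12 l1 by simp
  have gc: "continuous_on {0..} g"
  proof -
    have "continuous_on {0..} G" unfolding G_def by (intro continuous_intros)
    thus ?thesis by (rule continuous_on_cong[THEN iffD1, rotated 2]) (auto simp: gf G_def)
  qed
  define a1 where "a1 = exp (- l1) - 1"
  define a2 where "a2 = exp (- l2) - 1"
  have a12: "a1 < a2" using l12 by (simp add: a1_def a2_def)
  have a1p: "a1 > 0" using l1 by (simp add: a1_def)
  define A' where "A' = al / (- l1) * exp l1"
  define B where "B = be / (- l2) * exp l2"
  have A'p: "A' > 0" unfolding A'_def by (intro mult_pos_pos divide_pos_pos) (use al l1 in auto)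
  have Bp: "B > 0" unfolding B_def by (intro mult_pos_pos divide_pos_pos) (use be l2 in auto)
  define s where "s = B / (2 * (A' + B))"
  have s: "0 < s" "s < 1" using A'p Bp by (auto simp: s_def field_simps)
  define k where "k = a1 + s * (a2 - a1)"
  have k: "a1 < k" "k < a2" "k \<ge> 0" using s a12 a1p
    by (auto simp: k_def) (smt (verit) mult_pos_pos mult_less_cancel_right2)+
  define u where "u = (\<lambda>\<tau>::real. k * indicator {0..} \<tau> + indicator {0..1} \<tau> :: real)"
  have qc: "quasi_concave u" unfolding u_def by (rule qc_step[OF k(3)])
  have int: "integrable lborel (\<lambda>\<tau>. g (t - \<tau>) * u \<tau>)" for t
  proof -
    have i1: "integrable lborel (\<lambda>\<tau>. g (t - \<tau>) * (indicator {0..} \<tau> * (\<lambda>_. 1) \<tau>))"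
      using int_g_ind[OF g0 gc continuous_on_const] by blast
    have i2: "integrable lborel (\<lambda>\<tau>. g (t - \<tau>) * indicator {0..1} \<tau>)"
      by (rule int_g_ind2[OF g0 gc])
    have "integrable lborel (\<lambda>\<tau>. k * (g (t - \<tau>) * (indicator {0..} \<tau> * (\<lambda>_. 1) \<tau>)) + g (t - \<tau>) * indicator {0..1} \<tau>)"
      using i1 i2 by simp
    moreover have "(\<lambda>\<tau>. k * (g (t - \<tau>) * (indicator {0..} \<tau> * (\<lambda>_. 1) \<tau>)) + g (t - \<tau>) * indicator {0..1} \<tau>) =
        (\<lambda>\<tau>. g (t - \<tau>) * u \<tau>)" by (rule ext) (simp add: u_def algebra_simps)
    ultimately show ?thesis by simp
  qed
  define h where "h = convolution g u"
  define c1 where "c1 = al * (k - a1) / l1"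
  define c2 where "c2 = be * (k - a2) / l2"
  define C where "C = - k * (al / l1 + be / l2)"
  have c1: "c1 < 0" unfolding c1_def by (intro divide_pos_neg mult_pos_pos) (use al k l1 in auto)
  have c2: "c2 > 0" unfolding c2_def by (intro divide_neg_neg mult_pos_neg) (use be k l2 in auto)
  have IG: "(LINT \<tau>|lborel. indicator {a..b} \<tau> * G (t - \<tau>)) =
      al * ((exp (l1 * (t - a)) - exp (l1 * (t - b))) / l1) + be * ((exp (l2 * (t - a)) - exp (l2 * (t - b))) / l2)"
    if "a \<le> b" for a b t
  proof -
    have "(LINT \<tau>|lborel. indicator {a..b} \<tau> * G (t - \<tau>)) =
        (LINT \<tau>|lborel. al * (indicator {a..b} \<tau> * exp (l1 * (t - \<tau>))) + be * (indicator {a..b} \<tau> * exp (l2 * (t - \<tau>))))"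
      by (simp add: G_def algebra_simps)
    also have "\<dots> = al * (LINT \<tau>|lborel. indicator {a..b} \<tau> * exp (l1 * (t - \<tau>))) + be * (LINT \<tau>|lborel. indicator {a..b} \<tau> * exp (l2 * (t - \<tau>)))"
      by (subst Bochner_Integration.integral_add) (auto intro!: int_ind_cont continuous_intros)
    also have "\<dots> = al * ((exp (l1 * (t - a)) - exp (l1 * (t - b))) / l1) + be * ((exp (l2 * (t - a)) - exp (l2 * (t - b))) / l2)"
      using that l1 l2 by (simp add: int_exp_shift)
    finally show ?thesis .
  qed
  have hform: "h t = C + c1 * exp (l1 * t) + c2 * exp (l2 * t)" if t1: "t \<ge> 1" for t
  proof -
    have pt: "g (t - \<tau>) * u \<tau> = k * (indicator {0..t} \<tau> * G (t - \<tau>)) + indicator {0..1} \<tau> * G (t - \<tau>)" for \<tau>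
      using t1 by (cases "\<tau> < 0"; cases "\<tau> \<le> 1"; cases "\<tau> \<le> t") (auto simp: u_def g0 gf G_def indicator_def algebra_simps)
    have "h t = (LINT \<tau>|lborel. k * (indicator {0..t} \<tau> * G (t - \<tau>)) + indicator {0..1} \<tau> * G (t - \<tau>))"
      unfolding h_def convolution_def using pt by simp
    also have "\<dots> = k * (LINT \<tau>|lborel. indicator {0..t} \<tau> * G (t - \<tau>)) + (LINT \<tau>|lborel. indicator {0..1} \<tau> * G (t - \<tau>))"
      by (subst Bochner_Integration.integral_add) (auto intro!: int_ind_cont continuous_intros simp: G_def)
    also have "\<dots> = k * (al * ((exp (l1 * t) - 1) / l1) + be * ((exp (l2 * t) - 1) / l2)) +
        (al * ((exp (l1 * t) - exp (l1 * (t - 1))) / l1) + be * ((exp (l2 * t) - exp (l2 * (t - 1))) / l2))"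
      using t1 by (simp add: IG)
    also have "exp (l1 * (t - 1)) = exp (l1 * t) * exp (- l1)" by (simp add: algebra_simps flip: exp_add)
    also have "exp (l2 * (t - 1)) = exp (l2 * t) * exp (- l2)" by (simp add: algebra_simps flip: exp_add)
    also have "k * (al * ((exp (l1 * t) - 1) / l1) + be * ((exp (l2 * t) - 1) / l2)) +
        (al * ((exp (l1 * t) - exp (l1 * t) * exp (- l1)) / l1) + be * ((exp (l2 * t) - exp (l2 * t) * exp (- l2)) / l2))
        = C + c1 * exp (l1 * t) + c2 * exp (l2 * t)"
      using l1 l2 by (simp add: C_def c1_def c2_def a1_def a2_def field_simps)
    finally show ?thesis .
  qed
  define \<phi> where "\<phi> = (\<lambda>t. c1 * exp (l1 * t) + c2 * exp (l2 * t))"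
  have phi1: "\<phi> 1 > 0"
  proof -
    have e1: "c1 * exp l1 = - A' * (k - a1)" using l1 by (simp add: c1_def A'_def field_simps)
    have e2: "c2 * exp l2 = B * (a2 - k)" using l2 by (simp add: c2_def B_def field_simps)
    have "\<phi> 1 = - A' * (k - a1) + B * (a2 - k)" using e1 e2 by (simp add: \<phi>_def)
    also have "\<dots> = (a2 - a1) * (B - s * (A' + B))" by (simp add: k_def algebra_simps)
    also have "s * (A' + B) = B / 2" using A'p Bp by (simp add: s_def field_simps)
    finally have "\<phi> 1 = (a2 - a1) * (B - B / 2)" .
    moreover have "(a2 - a1) * (B - B / 2) > 0" using a12 Bp by (intro mult_pos_pos) auto
    ultimately show ?thesis by simp
  qed
  define y where "y = max 2 (ln (c2 / (- c1)) / (l1 - l2) + 1)"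
  have y: "y > 1" "y > ln (c2 / (- c1)) / (l1 - l2)" by (auto simp: y_def)
  have phiy: "\<phi> y < 0"
  proof -
    have "(l1 - l2) * y > ln (c2 / (- c1))" using y(2) l12 by (simp add: field_simps)
    hence "exp ((l1 - l2) * y) > c2 / (- c1)" using c1 c2
      by (metis divide_pos_pos exp_less_cancel_iff exp_ln neg_0_less_iff_less)
    hence "exp ((l1 - l2) * y) * (- c1) > c2" using c1 by (simp add: field_simps)
    hence "c2 * exp (l2 * y) < exp ((l1 - l2) * y) * (- c1) * exp (l2 * y)"
      by (intro mult_strict_right_mono) auto
    moreover have "exp ((l1 - l2) * y) * exp (l2 * y) = exp (l1 * y)" by (simp add: algebra_simps flip: exp_add)
    ultimately have "- c1 * exp (l1 * y) > c2 * exp (l2 * y)" by (simp add: algebra_simps)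
    thus ?thesis by (simp add: \<phi>_def)
  qed
  define z where "z = max (y + 1) (ln (\<phi> y / c1) / l1 + 1)"
  have z: "z > y" "z > ln (\<phi> y / c1) / l1" by (auto simp: z_def)
  have phiz: "\<phi> z > \<phi> y"
  proof -
    have q: "\<phi> y / c1 > 0" using phiy c1 by (simp add: divide_neg_neg)
    have "l1 * z < ln (\<phi> y / c1)" using z(2) l1 by (simp add: field_simps)
    hence "exp (l1 * z) < \<phi> y / c1" using q by (metis exp_less_cancel_iff exp_ln)
    hence "c1 * (\<phi> y / c1) < c1 * exp (l1 * z)" using c1 by (intro mult_strict_left_mono_neg) auto
    hence "c1 * exp (l1 * z) > \<phi> y" using c1 by (simp del: \<phi>_def)
    moreover have "c2 * exp (l2 * z) > 0" using c2 by simp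
    ultimately show ?thesis by (simp add: \<phi>_def)
  qed
  have "\<not> quasi_concave h"
  proof
    assume "quasi_concave h"
    define l where "l = (z - y) / (z - 1)"
    have zp: "z - 1 > 0" using z y by simp
    have l: "0 \<le> l" "l \<le> 1" using z y zp by (auto simp: l_def field_simps)
    have e: "l * (z - 1) = z - y" using zp by (simp add: l_def)
    have "l * 1 + (1 - l) * z = z - l * (z - 1)" by (simp add: algebra_simps)
    also have "\<dots> = y" using e by simp
    finally have "l * 1 + (1 - l) * z = y" .
    hence "h y \<ge> min (h 1) (h z)"
      using \<open>quasi_concave h\<close> l unfolding quasi_concave_def by metis
    moreover have "h 1 = C + \<phi> 1" "h y = C + \<phi> y" "h z = C + \<phi> z"
      using hform[of 1] hform[of y] hform[of z] y z by (auto simp: \<phi>_def)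
    ultimately show False using phi1 phiy phiz by linarith
  qed
  thus ?thesis using qc int by (auto simp: h_def)
qed



definition SU :: "(real \<Rightarrow> real) \<Rightarrow> bool" where
  "SU g \<longleftrightarrow> (\<forall>u. quasi_concave u \<and> (\<forall>t. integrable lborel (\<lambda>\<tau>. g (t - \<tau>) * u \<tau>))
          \<longrightarrow> quasi_concave (convolution g u))"

lemma su_zero:
  assumes "\<And>x. g x = 0" shows "SU g"
  unfolding SU_def quasi_concave_def convolution_def using assms by simp

lemma exp_convex4:
  fixes x1 x2 x3 x4 :: real
  assumes "x1 \<le> x2" "x2 \<le> x4" "x1 + x4 = x2 + x3"
  shows "exp x2 + exp x3 \<le> exp x1 + exp x4"
proof -
  define s where "s = x2 - x1"
  have s: "s \<ge> 0" using assms by (simp add: s_def)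
  have x3: "x3 = x4 - s" using assms by (simp add: s_def)
  have "exp x1 + exp x4 - exp x2 - exp x3 = (exp s - 1) * (exp x3 - exp x1)"
    using x3 by (simp add: s_def algebra_simps flip: exp_add exp_diff)
  moreover have "exp s - 1 \<ge> 0" using s by simp
  moreover have "exp x3 - exp x1 \<ge> 0" using assms by (simp add: x3 s_def)
  ultimately show ?thesis by (smt (verit) mult_nonneg_nonneg)
qed

lemma sep_integrable1:
  fixes g u p q :: "real \<Rightarrow> real"
  assumes sep: "\<And>\<tau>. \<tau> \<le> t \<Longrightarrow> g (t - \<tau>) = p t * q \<tau>"
    and I: "integrable lborel (\<lambda>\<tau>. g (t - \<tau>) * u \<tau>)"
    and pt: "p t \<noteq> 0"
  shows "integrable lborel (\<lambda>\<tau>. indicator {..t} \<tau> * (q \<tau> * u \<tau>))"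
proof -
  have ia: "integrable lborel (\<lambda>\<tau>. indicator {..t} \<tau> *\<^sub>R (g (t - \<tau>) * u \<tau>))"
    by (rule integrable_mult_indicator[OF _ I]) simp
  hence "integrable lborel (\<lambda>\<tau>. (indicator {..t} \<tau> *\<^sub>R (g (t - \<tau>) * u \<tau>)) / p t)"
    by (rule integrable_divide)
  moreover have "(\<lambda>\<tau>. (indicator {..t} \<tau> *\<^sub>R (g (t - \<tau>) * u \<tau>)) / p t) = (\<lambda>\<tau>. indicator {..t} \<tau> * (q \<tau> * u \<tau>))"
  proof (rule ext)
    fix \<tau> show "(indicator {..t} \<tau> *\<^sub>R (g (t - \<tau>) * u \<tau>)) / p t = indicator {..t} \<tau> * (q \<tau> * u \<tau>)"
      using pt sep[of \<tau>] by (cases "\<tau> \<le> t") (auto simp: field_simps)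
  qed
  ultimately show ?thesis by simp
qed

lemma su_single:
  fixes g :: "real \<Rightarrow> real"
  assumes g0: "\<And>x. x < 0 \<Longrightarrow> g x = 0" and gf: "\<And>x. x \<ge> 0 \<Longrightarrow> g x = a * exp (l * x)"
    and a: "a > 0"
  shows "SU g"
  unfolding SU_def
proof (intro allI impI, elim conjE)
  fix u assume qc: "quasi_concave u" and I: "\<forall>t. integrable lborel (\<lambda>\<tau>. g (t - \<tau>) * u \<tau>)"
  have sep: "g (t - \<tau>) = a * exp (l * t) * exp (- l * \<tau>) + 0 * 0" if "\<tau> \<le> t" for t \<tau>
    using that by (simp add: gf algebra_simps flip: exp_add)
  have cont: "continuous_on UNIV (convolution g u)"
  proof (rule conv_cont_sep[where pa="\<lambda>t. a * exp (l * t)" and qa="\<lambda>\<tau>. exp (- l * \<tau>)"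
        and pb="\<lambda>_. 0" and qb="\<lambda>_. 0", OF g0 sep])
    show "continuous_on UNIV (\<lambda>t. a * exp (l * t))" by (intro continuous_intros)
    show "continuous_on UNIV (\<lambda>t::real. 0::real)" by (intro continuous_intros)
    show "integrable lborel (\<lambda>\<tau>. indicator {..t} \<tau> * (exp (- l * \<tau>) * u \<tau>))" for t
      by (rule sep_integrable1[where g=g and p="\<lambda>t. a * exp (l * t)"]) (use I a in \<open>auto simp: gf algebra_simps simp flip: exp_add\<close>)
    show "integrable lborel (\<lambda>\<tau>. indicator {..t} \<tau> * (0 * u \<tau>))" for t by simp
  qed
  show "quasi_concave (convolution g u)"
  proof (rule abs_su[OF _ g0 _ _ cont qc])
    show "0 \<le> g x" for x using a by (cases "x < 0") (auto simp: g0 gf)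
    show "0 < g x" if "0 < x" for x using a that by (simp add: gf)
    show "g a' * g d \<le> g b * g (a' + d - b)" if "a' \<le> b" "b \<le> d" for a' b d
    proof (cases "a' < 0")
      case True thus ?thesis using a that by (cases "b < 0"; cases "a' + d - b < 0") (auto simp: g0 gf)
    next
      case False
      thus ?thesis using that by (simp add: gf algebra_simps flip: exp_add)
    qed
    show "integrable lborel (\<lambda>\<tau>. g (t - \<tau>) * u \<tau>)" for t using I by simp
  qed
qed



lemma exp_neg_lim:
  fixes l :: real assumes l: "l < 0"
  shows "((\<lambda>t. exp (l * t)) \<longlongrightarrow> 0) at_top"
proof -
  have "LIM t at_top. (\<lambda>_. l) t * t :> at_bot"
    by (rule filterlim_tendsto_neg_mult_at_bot[OF tendsto_const l filterlim_ident])
  thus ?thesis by (rule filterlim_compose[OF exp_at_bot])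
qed

lemma t_exp_neg_lim:
  fixes l :: real assumes l: "l < 0"
  shows "((\<lambda>t. t * exp (l * t)) \<longlongrightarrow> 0) at_top"
proof -
  have f: "LIM t at_top. (\<lambda>_. - l) t * t :> at_top"
    by (rule filterlim_tendsto_pos_mult_at_top[OF tendsto_const _ filterlim_ident]) (use l in simp)
  have "((\<lambda>t. (\<lambda>x. x ^ 1 / exp x) (- l * t)) \<longlongrightarrow> 0) at_top"
    by (rule filterlim_compose[OF tendsto_power_div_exp_0 f])
  hence "((\<lambda>t. (1 / (- l)) * ((- l * t) ^ 1 / exp (- l * t))) \<longlongrightarrow> (1 / (- l)) * 0) at_top"
    by (intro tendsto_mult tendsto_const) simp
  moreover have "(1 / (- l)) * ((- l * t) ^ 1 / exp (- l * t)) = t * exp (l * t)" for t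
    using l by (simp add: exp_minus field_simps)
  ultimately show ?thesis by simp
qed

lemma lim_transfer_pos:
  fixes g f :: "real \<Rightarrow> real"
  assumes "\<And>x. x \<ge> 0 \<Longrightarrow> g x = f x" "(f \<longlongrightarrow> 0) at_top"
  shows "(g \<longlongrightarrow> 0) at_top"
proof -
  have "eventually (\<lambda>x. f x = g x) at_top"
    using eventually_ge_at_top[of 0] by eventually_elim (use assms in auto)
  thus ?thesis using Lim_transform_eventually[OF assms(2)] by simp
qed

lemma cont_transfer_pos:
  fixes g f :: "real \<Rightarrow> real"
  assumes "\<And>x. x \<ge> 0 \<Longrightarrow> g x = f x" "continuous_on UNIV f"
  shows "continuous_on {0..} g"
  using continuous_on_subset[OF assms(2), of "{0..}"] assms(1)
  by (metis (no_types, lifting) atLeast_iff continuous_on_cong subset_UNIV)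

lemma cond_auto:
  fixes m0 m1 tau dl :: real
  assumes "tau^2 - 4 * dl \<le> 0"
  shows "m1^2 - m0 * (tau * m1 - dl * m0) \<ge> 0"
proof -
  have "m1^2 - m0 * (tau * m1 - dl * m0) = (m1 - tau * m0 / 2)^2 + (dl - tau^2 / 4) * m0^2"
    by (simp add: power2_eq_square algebra_simps)
  moreover have "(dl - tau^2 / 4) * m0^2 \<ge> 0" using assms by simp
  ultimately show ?thesis by (smt (verit) zero_le_power2)
qed

lemma su_nonneg:
  fixes g :: "real \<Rightarrow> real"
  assumes "SU g" "\<And>x. x < 0 \<Longrightarrow> g x = 0" "continuous_on {0..} g" "(g \<longlongrightarrow> 0) at_top"
  shows "g t \<ge> 0"
proof (rule ccontr)
  assume "\<not> g t \<ge> 0"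
  hence "g t < 0" by simp
  from neg_not_su[OF assms(2,3,4) this] assms(1) show False unfolding SU_def by blast
qed



lemma su_distinct:
  fixes g :: "real \<Rightarrow> real"
  assumes g0: "\<And>x. x < 0 \<Longrightarrow> g x = 0"
    and gf: "\<And>x. x \<ge> 0 \<Longrightarrow> g x = al * exp (l1 * x) + be * exp (l2 * x)"
    and l12: "l2 < l1" and ab: "al * be \<le> 0" and gnn: "\<And>x. g x \<ge> 0" and nz: "al \<noteq> 0 \<or> be \<noteq> 0"
  shows "SU g"
proof (cases "al = 0 \<or> be = 0")
  case True
  show ?thesis
  proof (cases "be = 0")
    case True
    hence "al \<noteq> 0" using nz by simp
    moreover have "al \<ge> 0" using gnn[of 0] True gf[of 0] by simp
    ultimately show ?thesis using True by (intro su_single[OF g0, where a=al and l=l1]) (auto simp: gf)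
  next
    case False
    hence "al = 0" using \<open>al = 0 \<or> be = 0\<close> by simp
    moreover have "be \<ge> 0" using gnn[of 0] \<open>al = 0\<close> gf[of 0] by simp
    ultimately show ?thesis using False by (intro su_single[OF g0, where a=be and l=l2]) (auto simp: gf)
  qed
next
  case False
  hence nz2: "al \<noteq> 0" "be \<noteq> 0" by auto
  have al: "al > 0" and be: "be < 0"
  proof -
    have "\<not> (al < 0 \<and> be > 0)"
    proof
      assume h: "al < 0 \<and> be > 0"
      define L where "L = l1 - l2"
      have L: "L > 0" using l12 by (simp add: L_def)
      define x where "x = max 0 (ln (2 * be / (- al)) / L) + 1"
      have x: "x > 0" "x > ln (2 * be / (- al)) / L" by (auto simp: x_def)
      have "- L * x < - ln (2 * be / (- al))" using x(2) L by (simp add: field_simps)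
      hence "exp (- L * x) < exp (- ln (2 * be / (- al)))" by simp
      also have "\<dots> = (- al) / (2 * be)"
      proof -
        have yp: "2 * be / (- al) > 0" using h by (intro divide_pos_pos) auto
        have "exp (- ln (2 * be / (- al))) = inverse (exp (ln (2 * be / (- al))))" by (rule exp_minus)
        also have "\<dots> = inverse (2 * be / (- al))" using yp by simp
        finally show ?thesis by simp
      qed
      finally have "be * exp (- L * x) < be * ((- al) / (2 * be))" using h by (intro mult_strict_left_mono) auto
      also have "be * ((- al) / (2 * be)) = - al / 2" using h by simp
      finally have "al + be * exp (- L * x) < 0" using h by simp
      hence "exp (l1 * x) * (al + be * exp (- L * x)) < 0" by (simp add: mult_pos_neg)
      moreover have "exp (l1 * x) * (al + be * exp (- L * x)) = g x"
        using x by (simp add: gf L_def algebra_simps flip: exp_add)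
      ultimately show False using gnn[of x] by simp
    qed
    note nn = this
    show "al > 0"
    proof (rule ccontr)
      assume "\<not> al > 0"
      hence aln: "al < 0" using nz2 by simp
      show False
      proof (cases "be > 0")
        case True thus False using nn aln by simp
      next
        case False
        hence "be < 0" using nz2 by simp
        hence "al * be > 0" using aln by (simp add: mult_neg_neg)
        thus False using ab by simp
      qed
    qed
    show "be < 0"
    proof (rule ccontr)
      assume "\<not> be < 0"
      hence "be > 0" using nz2 by simp
      hence "al * be > 0" using \<open>al > 0\<close> by simp
      thus False using ab by simp
    qed
  qed
  show ?thesis unfolding SU_def
  proof (intro allI impI, elim conjE)
    fix u assume qc: "quasi_concave u" and I: "\<forall>t. integrable lborel (\<lambda>\<tau>. g (t - \<tau>) * u \<tau>)"
    have sep: "\<And>t \<tau>. \<tau> \<le> t \<Longrightarrow> g (t - \<tau>) = al * exp (l1 * t) * exp (- l1 * \<tau>) + be * exp (l2 * t) * exp (- l2 * \<tau>)"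
      by (simp add: gf algebra_simps flip: exp_add)
    have det: "al * exp (l1 * t) * (be * exp (l2 * (t + 1))) - be * exp (l2 * t) * (al * exp (l1 * (t + 1))) \<noteq> 0" for t
    proof -
      have "al * exp (l1 * t) * (be * exp (l2 * (t + 1))) - be * exp (l2 * t) * (al * exp (l1 * (t + 1)))
          = al * be * exp (l1 * t) * exp (l2 * t) * (exp l2 - exp l1)"
        by (simp add: algebra_simps flip: exp_add)
      moreover have "exp l2 - exp l1 \<noteq> 0" using l12 by simp
      ultimately show ?thesis using nz2 by simp
    qed
    have cont: "continuous_on UNIV (convolution g u)"
    proof (rule conv_cont_sep[where pa="\<lambda>t. al * exp (l1 * t)" and qa="\<lambda>\<tau>. exp (- l1 * \<tau>)"
        and pb="\<lambda>t. be * exp (l2 * t)" and qb="\<lambda>\<tau>. exp (- l2 * \<tau>)", OF g0 sep])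
      show "continuous_on UNIV (\<lambda>t. al * exp (l1 * t))" by (intro continuous_intros)
      show "continuous_on UNIV (\<lambda>t. be * exp (l2 * t))" by (intro continuous_intros)
      show "integrable lborel (\<lambda>\<tau>. indicator {..t} \<tau> * (exp (- l1 * \<tau>) * u \<tau>))" for t
        by (rule sep_integrable(1)[where g=g and pa="\<lambda>t. al * exp (l1 * t)" and pb="\<lambda>t. be * exp (l2 * t)", OF sep])
           (use I det in auto)
      show "integrable lborel (\<lambda>\<tau>. indicator {..t} \<tau> * (exp (- l2 * \<tau>) * u \<tau>))" for t
        by (rule sep_integrable(2)[where g=g and pa="\<lambda>t. al * exp (l1 * t)" and pb="\<lambda>t. be * exp (l2 * t)", OF sep])
           (use I det in auto)
    qed
    show "quasi_concave (convolution g u)"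
    proof (rule abs_su[OF gnn g0 _ _ cont qc])
      show "0 < g x" if "0 < x" for x
      proof -
        have "al + be \<ge> 0" using gnn[of 0] gf[of 0] by simp
        have "exp (l2 * x) < exp (l1 * x)" using that l12 by simp
        hence "(- be) * exp (l2 * x) < (- be) * exp (l1 * x)" using be by simp
        also have "\<dots> \<le> al * exp (l1 * x)" using \<open>al + be \<ge> 0\<close> by (intro mult_right_mono) auto
        finally show ?thesis using that by (simp add: gf)
      qed
      show "g a' * g d \<le> g b * g (a' + d - b)" if ab': "a' \<le> b" "b \<le> d" for a' b d
      proof (cases "a' < 0")
        case True thus ?thesis using gnn by (simp add: g0)
      next
        case False
        define c where "c = a' + d - b"
        have nn: "a' \<ge> 0" "b \<ge> 0" "c \<ge> 0" "d \<ge> 0" using False ab' by (auto simp: c_def)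
        have e1: "g a' * g d = al^2 * exp (l1 * (a' + d)) + be^2 * exp (l2 * (a' + d)) +
            al * be * (exp (l1 * a' + l2 * d) + exp (l2 * a' + l1 * d))"
          using nn by (simp add: gf algebra_simps power2_eq_square flip: exp_add)
        have e2: "g b * g c = al^2 * exp (l1 * (a' + d)) + be^2 * exp (l2 * (a' + d)) +
            al * be * (exp (l1 * b + l2 * c) + exp (l2 * b + l1 * c))"
          using nn by (simp add: gf c_def algebra_simps power2_eq_square flip: exp_add)
        have "exp (l1 * b + l2 * c) + exp (l2 * b + l1 * c) \<le> exp (l1 * a' + l2 * d) + exp (l2 * a' + l1 * d)"
        proof (rule exp_convex4)
          have "l1 * b + l2 * c - (l1 * a' + l2 * d) = (l1 - l2) * (b - a')" by (simp add: c_def algebra_simps)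
          moreover have "(l1 - l2) * (b - a') \<ge> 0" using l12 ab' by simp
          ultimately show "l1 * a' + l2 * d \<le> l1 * b + l2 * c" by linarith
          have "l2 * a' + l1 * d - (l1 * b + l2 * c) = (l1 - l2) * (d - b)" by (simp add: c_def algebra_simps)
          moreover have "(l1 - l2) * (d - b) \<ge> 0" using l12 ab' by simp
          ultimately show "l1 * b + l2 * c \<le> l2 * a' + l1 * d" by linarith
          show "l1 * a' + l2 * d + (l2 * a' + l1 * d) = l1 * b + l2 * c + (l2 * b + l1 * c)"
            by (simp add: c_def algebra_simps)
        qed
        hence "al * be * (exp (l1 * b + l2 * c) + exp (l2 * b + l1 * c)) \<ge> al * be * (exp (l1 * a' + l2 * d) + exp (l2 * a' + l1 * d))"
          using ab by (intro mult_left_mono_neg) auto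
        thus ?thesis using e1 e2 by (simp add: c_def)
      qed
      show "integrable lborel (\<lambda>\<tau>. g (t - \<tau>) * u \<tau>)" for t using I by simp
    qed
  qed
qed



lemma case_pos:
  fixes g :: "real \<Rightarrow> real" and m :: "nat \<Rightarrow> real"
  assumes g0: "\<And>x. x < 0 \<Longrightarrow> g x = 0"
    and gser: "\<And>t. t \<ge> 0 \<Longrightarrow> (\<lambda>k. t ^ k / fact k * m k) sums g t"
    and rec: "\<And>k. m (Suc (Suc k)) = tau * m (Suc k) - dl * m k"
    and tau: "tau < 0" and dl: "dl > 0" and D: "tau^2 - 4 * dl > 0"
  shows "SU g \<longleftrightarrow> (\<forall>t. g t \<ge> 0) \<and> (m 1)^2 - m 0 * m 2 \<ge> 0"
proof -
  define sD where "sD = sqrt (tau^2 - 4 * dl)"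
  have sD: "sD > 0" "sD^2 = tau^2 - 4 * dl" using D by (auto simp: sD_def)
  define l1 where "l1 = (tau + sD) / 2"
  define l2 where "l2 = (tau - sD) / 2"
  have l12: "l2 < l1" using sD by (simp add: l1_def l2_def)
  have "sD^2 < (- tau)^2" using sD dl by simp
  hence "sD < - tau" using tau sD(1) by (smt (verit) power_mono)
  hence l1: "l1 < 0" by (simp add: l1_def)
  have r1: "l1^2 = tau * l1 - dl" and r2: "l2^2 = tau * l2 - dl"
    using sD(2) by (simp_all add: l1_def l2_def power2_eq_square field_simps)
  define al where "al = (m 1 - l2 * m 0) / (l1 - l2)"
  define be where "be = (l1 * m 0 - m 1) / (l1 - l2)"
  have mk: "m k = al * l1 ^ k + be * l2 ^ k" for k
    unfolding al_def be_def by (rule seq_distinct[where m=m, OF rec r1 r2]) (use l12 in simp)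
  have gf: "g x = al * exp (l1 * x) + be * exp (l2 * x)" if "x \<ge> 0" for x
  proof -
    have "(\<lambda>k. x ^ k / fact k * m k) sums (al * exp (l1 * x) + be * exp (l2 * x))"
      unfolding mk by (rule sums_distinct)
    thus ?thesis using gser[OF that] sums_unique2 by blast
  qed
  have cond: "(m 1)^2 - m 0 * m 2 = - (al * be) * (l1 - l2)^2"
    unfolding mk by (simp add: power2_eq_square algebra_simps)
  have gc: "continuous_on {0..} g"
    by (rule cont_transfer_pos[OF gf]) (auto intro!: continuous_intros)
  have glim: "(g \<longlongrightarrow> 0) at_top"
  proof (rule lim_transfer_pos[OF gf])
    show "((\<lambda>x. al * exp (l1 * x) + be * exp (l2 * x)) \<longlongrightarrow> 0) at_top"
      using tendsto_add[OF tendsto_mult_right_zero[OF exp_neg_lim[OF l1], of al]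
                            tendsto_mult_right_zero[OF exp_neg_lim[of l2], of be]] l12 l1 by simp
  qed
  have dpos: "(l1 - l2)^2 > 0" using l12 by simp
  show ?thesis
  proof
    assume su: "SU g"
    have gnn: "\<forall>t. g t \<ge> 0" using su_nonneg[OF su g0 gc glim] by blast
    have "al * be \<le> 0"
    proof (rule ccontr)
      assume "\<not> al * be \<le> 0"
      hence ab: "al * be > 0" by simp
      have "al + be \<ge> 0" using gnn gf[of 0] by (metis exp_zero mult_1_right mult_zero_right order_refl)
      hence "al > 0 \<and> be > 0" using ab by (smt (verit) mult_nonpos_nonpos mult_nonneg_nonpos mult_nonpos_nonneg)
      hence "\<exists>u. quasi_concave u \<and> (\<forall>t. integrable lborel (\<lambda>\<tau>. g (t - \<tau>) * u \<tau>)) \<and>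
             \<not> quasi_concave (convolution g u)"
        using logconvex_not_su[OF g0 gf _ _ l12 l1] by simp
      thus False using su unfolding SU_def by blast
    qed
    hence "(m 1)^2 - m 0 * m 2 \<ge> 0" unfolding cond using dpos by (simp add: mult_nonpos_nonneg)
    thus "(\<forall>t. g t \<ge> 0) \<and> (m 1)^2 - m 0 * m 2 \<ge> 0" using gnn by simp
  next
    assume h: "(\<forall>t. g t \<ge> 0) \<and> (m 1)^2 - m 0 * m 2 \<ge> 0"
    have ab: "al * be \<le> 0"
    proof (rule ccontr)
      assume "\<not> al * be \<le> 0"
      hence "- (al * be) * (l1 - l2)^2 < 0" using dpos by (simp add: mult_neg_pos)
      thus False using h cond by simp
    qed
    show "SU g"
    proof (cases "al = 0 \<and> be = 0")
      case True
      have "g x = 0" for x by (cases "x < 0") (auto simp: g0 gf True)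
      thus ?thesis by (rule su_zero)
    next
      case False
      thus ?thesis using su_distinct[OF g0 gf l12 ab] h by auto
    qed
  qed
qed



lemma su_double:
  fixes g :: "real \<Rightarrow> real"
  assumes g0: "\<And>x. x < 0 \<Longrightarrow> g x = 0"
    and gf: "\<And>x. x \<ge> 0 \<Longrightarrow> g x = (al + be * x) * exp (l * x)"
    and gnn: "\<And>x. g x \<ge> 0" and nz: "al \<noteq> 0 \<or> be \<noteq> 0"
  shows "SU g"
proof -
  have al: "al \<ge> 0" using gnn[of 0] gf[of 0] by simp
  have be: "be \<ge> 0"
  proof (rule ccontr)
    assume "\<not> be \<ge> 0"
    hence b: "be < 0" by simp
    define x where "x = (al + 1) / (- be)"
    have x: "x > 0" unfolding x_def using al b by (intro divide_pos_pos) auto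
    have "al + be * x = -1" using b by (simp add: x_def field_simps)
    hence "g x < 0" using x by (simp add: gf)
    thus False using gnn[of x] by simp
  qed
  show ?thesis
  proof (cases "be = 0")
    case True
    hence "al > 0" using nz al by simp
    thus ?thesis using True by (intro su_single[OF g0, where a=al and l=l]) (auto simp: gf)
  next
    case False
    hence bep: "be > 0" using be by simp
    show ?thesis unfolding SU_def
    proof (intro allI impI, elim conjE)
      fix u assume qc: "quasi_concave u" and I: "\<forall>t. integrable lborel (\<lambda>\<tau>. g (t - \<tau>) * u \<tau>)"
      have sep: "\<And>t \<tau>. \<tau> \<le> t \<Longrightarrow> g (t - \<tau>) = (al + be * t) * exp (l * t) * exp (- l * \<tau>) + (- be * exp (l * t)) * (\<tau> * exp (- l * \<tau>))"
        by (simp add: gf algebra_simps flip: exp_add)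
      have det: "(al + be * t) * exp (l * t) * (- be * exp (l * (t + 1))) - (- be * exp (l * t)) * ((al + be * (t + 1)) * exp (l * (t + 1))) \<noteq> 0" for t
      proof -
        have "(al + be * t) * exp (l * t) * (- be * exp (l * (t + 1))) - (- be * exp (l * t)) * ((al + be * (t + 1)) * exp (l * (t + 1)))
            = be * be * (exp (l * t) * exp (l * (t + 1)))"
          by (simp add: algebra_simps)
        thus ?thesis using bep by simp
      qed
      have cont: "continuous_on UNIV (convolution g u)"
      proof (rule conv_cont_sep[where pa="\<lambda>t. (al + be * t) * exp (l * t)" and qa="\<lambda>\<tau>. exp (- l * \<tau>)"
          and pb="\<lambda>t. - be * exp (l * t)" and qb="\<lambda>\<tau>. \<tau> * exp (- l * \<tau>)", OF g0 sep])
        show "continuous_on UNIV (\<lambda>t. (al + be * t) * exp (l * t))" by (intro continuous_intros)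
        show "continuous_on UNIV (\<lambda>t. - be * exp (l * t))" by (intro continuous_intros)
        show "integrable lborel (\<lambda>\<tau>. indicator {..t} \<tau> * (exp (- l * \<tau>) * u \<tau>))" for t
          by (rule sep_integrable(1)[where g=g and pa="\<lambda>t. (al + be * t) * exp (l * t)" and pb="\<lambda>t. - be * exp (l * t)", OF sep])
             (use I det in auto)
        show "integrable lborel (\<lambda>\<tau>. indicator {..t} \<tau> * (\<tau> * exp (- l * \<tau>) * u \<tau>))" for t
          by (rule sep_integrable(2)[where g=g and pa="\<lambda>t. (al + be * t) * exp (l * t)" and pb="\<lambda>t. - be * exp (l * t)", OF sep])
             (use I det in auto)
      qed
      show "quasi_concave (convolution g u)"
      proof (rule abs_su[OF gnn g0 _ _ cont qc])
        show "0 < g x" if "0 < x" for x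
        proof -
          have "al + be * x > 0" using al bep that by (simp add: add_nonneg_pos)
          thus ?thesis using that by (simp add: gf)
        qed
        show "g a' * g d \<le> g b * g (a' + d - b)" if ab': "a' \<le> b" "b \<le> d" for a' b d
        proof (cases "a' < 0")
          case True thus ?thesis using gnn by (simp add: g0)
        next
          case False
          define c where "c = a' + d - b"
          have nn: "a' \<ge> 0" "b \<ge> 0" "c \<ge> 0" "d \<ge> 0" using False ab' by (auto simp: c_def)
          have e1: "g a' * g d = (al + be * a') * (al + be * d) * exp (l * (a' + d))"
            using nn by (simp add: gf algebra_simps flip: exp_add)
          have e2: "g b * g c = (al + be * b) * (al + be * c) * exp (l * (a' + d))"
            using nn by (simp add: gf c_def algebra_simps flip: exp_add)
          have "(al + be * b) * (al + be * c) - (al + be * a') * (al + be * d) = be * be * ((b - a') * (d - b))"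
            by (simp add: c_def algebra_simps)
          moreover have "be * be * ((b - a') * (d - b)) \<ge> 0" using ab' by simp
          ultimately have "(al + be * a') * (al + be * d) \<le> (al + be * b) * (al + be * c)" by linarith
          hence "(al + be * a') * (al + be * d) * exp (l * (a' + d)) \<le> (al + be * b) * (al + be * c) * exp (l * (a' + d))"
            by (intro mult_right_mono) auto
          thus ?thesis using e1 e2 by (simp add: c_def)
        qed
        show "integrable lborel (\<lambda>\<tau>. g (t - \<tau>) * u \<tau>)" for t using I by simp
      qed
    qed
  qed
qed



lemma case_zero:
  fixes g :: "real \<Rightarrow> real" and m :: "nat \<Rightarrow> real"
  assumes g0: "\<And>x. x < 0 \<Longrightarrow> g x = 0"
    and gser: "\<And>t. t \<ge> 0 \<Longrightarrow> (\<lambda>k. t ^ k / fact k * m k) sums g t"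
    and rec: "\<And>k. m (Suc (Suc k)) = tau * m (Suc k) - dl * m k"
    and tau: "tau < 0" and D: "tau^2 - 4 * dl = 0"
  shows "SU g \<longleftrightarrow> (\<forall>t. g t \<ge> 0) \<and> (m 1)^2 - m 0 * m 2 \<ge> 0"
proof -
  define l where "l = tau / 2"
  have l: "l < 0" using tau by (simp add: l_def)
  have rec': "m (Suc (Suc k)) = (2 * l) * m (Suc k) - l^2 * m k" for k
  proof -
    have "dl = l^2" using D by (simp add: l_def power2_eq_square field_simps)
    thus ?thesis using rec[of k] by (simp add: l_def)
  qed
  define al where "al = m 0"
  define be where "be = m 1 - l * m 0"
  have mk: "m k = al * l ^ k + be * (real k * l ^ (k - 1))" for k
    unfolding al_def be_def by (rule seq_double[where m=m, OF rec'])
  have gf: "g x = (al + be * x) * exp (l * x)" if "x \<ge> 0" for x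
  proof -
    have "(\<lambda>k. x ^ k / fact k * m k) sums ((al + be * x) * exp (l * x))"
      unfolding mk by (rule sums_double)
    thus ?thesis using gser[OF that] sums_unique2 by blast
  qed
  have cond: "(m 1)^2 - m 0 * m 2 \<ge> 0"
    using cond_auto[of tau dl "m 1" "m 0"] D rec[of 0] by (simp add: numeral_2_eq_2)
  have gc: "continuous_on {0..} g"
    by (rule cont_transfer_pos[OF gf]) (auto intro!: continuous_intros)
  have glim: "(g \<longlongrightarrow> 0) at_top"
  proof (rule lim_transfer_pos[OF gf])
    have "((\<lambda>x. al * exp (l * x) + be * (x * exp (l * x))) \<longlongrightarrow> 0) at_top"
      using tendsto_add[OF tendsto_mult_right_zero[OF exp_neg_lim[OF l], of al]
                            tendsto_mult_right_zero[OF t_exp_neg_lim[OF l], of be]] by simp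
    thus "((\<lambda>x. (al + be * x) * exp (l * x)) \<longlongrightarrow> 0) at_top" by (simp add: algebra_simps)
  qed
  show ?thesis
  proof
    assume su: "SU g"
    thus "(\<forall>t. g t \<ge> 0) \<and> (m 1)^2 - m 0 * m 2 \<ge> 0" using su_nonneg[OF su g0 gc glim] cond by blast
  next
    assume h: "(\<forall>t. g t \<ge> 0) \<and> (m 1)^2 - m 0 * m 2 \<ge> 0"
    show "SU g"
    proof (cases "al = 0 \<and> be = 0")
      case True
      have "g x = 0" for x by (cases "x < 0") (auto simp: g0 gf True)
      thus ?thesis by (rule su_zero)
    next
      case False
      thus ?thesis using su_double[OF g0 gf] h by auto
    qed
  qed
qed

lemma case_neg:
  fixes g :: "real \<Rightarrow> real" and m :: "nat \<Rightarrow> real"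
  assumes g0: "\<And>x. x < 0 \<Longrightarrow> g x = 0"
    and gser: "\<And>t. t \<ge> 0 \<Longrightarrow> (\<lambda>k. t ^ k / fact k * m k) sums g t"
    and rec: "\<And>k. m (Suc (Suc k)) = tau * m (Suc k) - dl * m k"
    and tau: "tau < 0" and D: "tau^2 - 4 * dl < 0"
  shows "SU g \<longleftrightarrow> (\<forall>t. g t \<ge> 0) \<and> (m 1)^2 - m 0 * m 2 \<ge> 0"
proof -
  define w where "w = sqrt (- (tau^2 - 4 * dl)) / 2"
  have w: "w > 0" "4 * w^2 = - (tau^2 - 4 * dl)" using D by (auto simp: w_def power_divide)
  define mu where "mu = Complex (tau / 2) w"
  define z where "z = Complex (m 0) ((m 0 * tau / 2 - m 1) / w)"
  have r: "mu^2 = of_real tau * mu - of_real dl"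
    using w by (simp add: mu_def complex_eq_iff power2_eq_square algebra_simps)
  have z0: "Re z = m 0" by (simp add: z_def)
  have z1: "Re (z * mu) = m 1" using w by (simp add: z_def mu_def field_simps)
  have mk: "m k = Re (z * mu ^ k)" for k by (rule seq_complex[where m=m, OF rec r z0 z1])
  have gf: "g x = Re (z * exp (mu * of_real x))" if "x \<ge> 0" for x
  proof -
    have "(\<lambda>k. x ^ k / fact k * m k) sums Re (z * exp (mu * of_real x))"
      unfolding mk by (rule sums_complex)
    thus ?thesis using gser[OF that] sums_unique2 by blast
  qed
  have cond: "(m 1)^2 - m 0 * m 2 \<ge> 0"
    using cond_auto[of tau dl "m 1" "m 0"] D rec[of 0] by (simp add: numeral_2_eq_2)
  have gc: "continuous_on {0..} g"
    by (rule cont_transfer_pos[OF gf]) (auto intro!: continuous_intros)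
  have glim: "(g \<longlongrightarrow> 0) at_top"
  proof (rule lim_transfer_pos[OF gf])
    have l: "tau / 2 < 0" using tau by simp
    have b: "norm (Re (z * exp (mu * of_real x))) \<le> cmod z * exp (tau / 2 * x)" for x
    proof -
      have "norm (Re (z * exp (mu * of_real x))) \<le> cmod (z * exp (mu * of_real x))" by (simp only: real_norm_def abs_Re_le_cmod)
      also have "\<dots> = cmod z * exp (tau / 2 * x)" by (simp add: norm_mult norm_exp_eq_Re mu_def)
      finally show ?thesis .
    qed
    show "((\<lambda>x. Re (z * exp (mu * of_real x))) \<longlongrightarrow> 0) at_top"
      by (rule Lim_null_comparison[OF always_eventually[OF allI[OF b]]])
         (use tendsto_mult_right_zero[OF exp_neg_lim[OF l], of "cmod z"] in simp)
  qed
  show ?thesis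
  proof
    assume su: "SU g"
    thus "(\<forall>t. g t \<ge> 0) \<and> (m 1)^2 - m 0 * m 2 \<ge> 0" using su_nonneg[OF su g0 gc glim] cond by blast
  next
    assume h: "(\<forall>t. g t \<ge> 0) \<and> (m 1)^2 - m 0 * m 2 \<ge> 0"
    define P where "P = pi / w"
    have P: "P > 0" using w by (simp add: P_def)
    define cc where "cc = exp (tau / 2 * P)"
    have cc: "cc > 0" by (simp add: cc_def)
    have shift: "g (t + P) = - cc * g t" if t: "t \<ge> 0" for t
    proof -
      have "mu * of_real P = Complex (tau / 2 * P) pi" using w by (simp add: mu_def P_def complex_eq_iff)
      hence eP: "exp (mu * of_real P) = - of_real cc"
        by (simp add: exp_eq_polar cc_def)
      have "exp (mu * of_real (t + P)) = exp (mu * of_real t) * exp (mu * of_real P)"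
        by (simp add: distrib_left flip: exp_add)
      hence "g (t + P) = Re (z * exp (mu * of_real t) * (- of_real cc))"
        using t P by (simp add: gf eP mult.assoc)
      also have "\<dots> = - cc * g t" using t by (simp add: gf)
      finally show ?thesis .
    qed
    have "g x = 0" for x
    proof (cases "x < 0")
      case True thus ?thesis by (simp add: g0)
    next
      case False
      have "g (x + P) \<ge> 0" "g x \<ge> 0" using h by auto
      hence "- cc * g x \<ge> 0" using shift[of x] False by simp
      hence "g x \<le> 0" using cc by (simp add: mult_le_0_iff)
      thus ?thesis using \<open>g x \<ge> 0\<close> by simp
    qed
    thus "SU g" by (rule su_zero)
  qed
qed



lemma main_scalar:
  fixes g :: "real \<Rightarrow> real" and m :: "nat \<Rightarrow> real"
  assumes g0: "\<And>x. x < 0 \<Longrightarrow> g x = 0"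
    and gser: "\<And>t. t \<ge> 0 \<Longrightarrow> (\<lambda>k. t ^ k / fact k * m k) sums g t"
    and rec: "\<And>k. m (Suc (Suc k)) = tau * m (Suc k) - dl * m k"
    and tau: "tau < 0" and dl: "dl > 0"
  shows "SU g \<longleftrightarrow> (\<forall>t. g t \<ge> 0) \<and> (m 1)^2 - m 0 * m 2 \<ge> 0"
proof -
  consider "tau^2 - 4 * dl > 0" | "tau^2 - 4 * dl = 0" | "tau^2 - 4 * dl < 0" by linarith
  thus ?thesis
  proof cases
    case 1 thus ?thesis using case_pos[where g=g and m=m and tau=tau and dl=dl] g0 gser rec tau dl by blast
  next
    case 2 thus ?thesis using case_zero[where g=g and m=m and tau=tau and dl=dl] g0 gser rec tau by blast
  next
    case 3 thus ?thesis using case_neg[where g=g and m=m and tau=tau and dl=dl] g0 gser rec tau by blast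
  qed
qed

theorem corollary1:
  fixes A :: "real^2^2" and b c :: "real^2"
  assumes "hurwitz A"
  shows "strongly_unimodal A b c \<longleftrightarrow>
           ((\<forall>t. impulse_resp A b c t \<ge> 0) \<and>
            (c \<bullet> (A *v b))\<^sup>2 - (c \<bullet> b) * (c \<bullet> ((A ** A) *v b)) \<ge> 0)"
proof -
  define g where "g = impulse_resp A b c"
  define m where "m = (\<lambda>k. c \<bullet> (mat_pow A k *v b))"
  have su: "strongly_unimodal A b c \<longleftrightarrow> SU g"
    by (simp add: strongly_unimodal_def SU_def g_def)
  have g0: "g x = 0" if "x < 0" for x using that by (simp add: g_def impulse_resp_def)
  have gser: "(\<lambda>k. t ^ k / fact k * m k) sums g t" if "t \<ge> 0" for t
    using g_series[of t c A b] that by (simp add: g_def m_def impulse_resp_def)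
  have rec: "m (Suc (Suc k)) = tr2 A * m (Suc k) - det2 A * m k" for k
    by (simp add: m_def mat_pow_rec2 matrix_vector_mult_diff_rdistrib scaleR_mv inner_diff_right)
  have m0: "m 0 = c \<bullet> b" by (simp add: m_def)
  have m1: "m 1 = c \<bullet> (A *v b)" by (simp add: m_def mat_pow_Suc)
  have m2: "m 2 = c \<bullet> ((A ** A) *v b)" by (simp add: m_def mat_pow_Suc numeral_2_eq_2)
  have "SU g \<longleftrightarrow> (\<forall>t. g t \<ge> 0) \<and> (m 1)^2 - m 0 * m 2 \<ge> 0"
    using main_scalar[where g=g and m=m and tau="tr2 A" and dl="det2 A"] g0 gser rec hurwitz_tr_det[OF assms] by blast
  thus ?thesis using su m0 m1 m2 by (simp add: g_def)
qed

end
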